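(* Assume the standing setting and Assumptions (A1)–(A2) described in the context. Suppose there is a constant $r>0$ such that $\mathcal{J}^0(N,0;u)\ge r\,\mathbb{E}\big[\sum_{k=0}^{N-1}|u_k|^2\big]$ for all $u\in\mathcal{U}$. Then for every $\xi\in L^2_{\mathcal{F}_{N-1}}(\Omega;\mathbb{R}^n)$, the functional $u\mapsto\mathcal{J}(N,\xi;u)$ is strictly convex and coercive on $\mathcal{U}$, i.e. $\mathcal{J}(N,\xi;u)\to\infty$ as $\|u\|_{\mathcal{U}}\to\infty$.
   Context: Fix integers $N\ge 1$, $n,m\ge1$, $\mathcal{T}=\{0,\dots,N-1\}$. $(\Omega,\mathcal{F},\mathbb{P})$ complete with scalar sequence $\{\omega_k\}_{k\in\mathcal{T}}$, $\mathcal{F}_k=\sigma\{\omega_0,\dots,\omega_k\}$ (completed), $\mathcal{F}_{-1}$ trivial, $\mathbb{E}[\omega_k\mid\mathcal{F}_{k-1}]=0$, $\mathbb{E}[\omega_k^2\mid\mathcal{F}_{k-1}]=1$. $\mathbb{E}_{k-1}[\cdot]=\mathbb{E}[\cdot\mid\mathcal{F}_{k-1}]$. $L^2_{\mathcal{F}_{N-1}}(\Omega;\mathbb{R}^n)$ = square-integrable $\mathcal{F}_{N-1}$-measurable vectors; $L^2_{\mathbb{F}}(\mathcal{T};\mathbb{R}^d)$ = processes $(h_k)_{k\in\mathcal{T}}$, $h_k$ $\mathcal{F}_{k-1}$-measurable, $\mathbb{E}\sum|h_k|^2<\infty$. $\mathcal{U}=L^2_{\mathbb{F}}(\mathcal{T};\mathbb{R}^m)$,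 $\|u\|_{\mathcal{U}}^2=\mathbb{E}\sum_k|u_k|^2$. (A1): $A_k,C_k\in\mathbb{R}^{n\times n}$, $B_k\in\mathbb{R}^{n\times m}$ deterministic; $q\in L^2_{\mathbb{F}}(\mathcal{T};\mathbb{R}^n)$. (A2): $G_0\in\mathbb{S}^n$, $Q_k\in\mathbb{S}^n$, $R_k\in\mathbb{S}^m$, $S_k\in\mathbb{R}^{m\times n}$ deterministic; $\eta\in L^2_{\mathbb{F}}(\mathcal{T};\mathbb{R}^n)$, $\rho\in L^2_{\mathbb{F}}(\mathcal{T};\mathbb{R}^m)$. State equation: $y_k=A_k\mathbb{E}_{k-1}[y_{k+1}]+B_ku_k+C_k\mathbb{E}_{k-1}[y_{k+1}\omega_k]+q_k$ ($k\in\mathcal{T}$), $y_N=\xi$, with unique adapted square-integrable solution $y^{(\xi,u)}$. Cost: $\mathcal{J}(N,\xi;u)=\frac12\mathbb{E}\{\langle G_0y_0,y_0\rangle+\sum_{k=0}^{N-1}[\langle Q_k\bar y_k,\bar y_k\rangle+2\langle S_k\bar y_k,u_k\rangle+\langle R_ku_k,u_k\rangle+2\langle\eta_k,\bar y_k\rangle+2\langle\rho_k,u_k\rangle]\}$, $\bar y_k=\mathbb{E}_{k-1}[y_{k+1}]$, $y=y^{(\xi,u)}$. $\mathcal{J}^0(N,0;v)=\frac12\mathbb{E}\{\langle G_0y_0,y_0\rangle+\sum_{k=0}^{N-1}[\langle Q_k\bar y_k,\bar y_k\rangle+2\langle S_k\bar y_k,v_k\rangle+\langle R_kv_k,v_k\rangle]\}$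 where $y$ solves $y_k=A_k\mathbb{E}_{k-1}[y_{k+1}]+B_kv_k+C_k\mathbb{E}_{k-1}[y_{k+1}\omega_k]$, $y_N=0$. *)

theory Defs
  imports "HOL-Probability.Probability"
begin

text \<open>Fm M w k is the sigma-algebra F_{k-1}: for k = 0 the trivial one,
  for k \<ge> 1 the completion (by the null sets of M) of the sigma-algebra
  generated by w_0, ..., w_{k-1}.\<close>
definition Fm :: "'a measure \<Rightarrow> (nat \<Rightarrow> 'a \<Rightarrow> real) \<Rightarrow> nat \<Rightarrow> 'a measure" where
  "Fm M w k = (if k = 0 then sigma (space M) {}
     else sigma (space M)
       ({w i -` B \<inter> space M | i B. i < k \<and> B \<in> sets borel} \<union> null_sets M))"

text \<open>Componentwise conditional expectation of a random vector.\<close>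
definition vcexp :: "'a measure \<Rightarrow> 'a measure \<Rightarrow> ('a \<Rightarrow> real^'d) \<Rightarrow> 'a \<Rightarrow> real^'d" where
  "vcexp M F f = (\<lambda>x. \<chi> i. real_cond_exp M F (\<lambda>z. f z $ i) x)"

text \<open>L^2_F(T;R^d): h_k is F_{k-1}-measurable and square integrable, k < N.\<close>
definition L2F :: "'a measure \<Rightarrow> (nat \<Rightarrow> 'a \<Rightarrow> real) \<Rightarrow> nat \<Rightarrow> (nat \<Rightarrow> 'a \<Rightarrow> real^'d) set" where
  "L2F M w N = {h. \<forall>k<N. h k \<in> borel_measurable (Fm M w k) \<and>
                          integrable M (\<lambda>x. (norm (h k x))\<^sup>2)}"

text \<open>Norm on U: sqrt (E sum_{k<N} |u_k|^2).\<close>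
definition Unorm :: "'a measure \<Rightarrow> nat \<Rightarrow> (nat \<Rightarrow> 'a \<Rightarrow> real^'d) \<Rightarrow> real" where
  "Unorm M N u = sqrt (integral\<^sup>L M (\<lambda>x. \<Sum>k<N. (norm (u k x))\<^sup>2))"

text \<open>Backward recursion of the state equation: ybw ... j = y_{N-j}.\<close>
primrec ybw :: "'a measure \<Rightarrow> (nat \<Rightarrow> 'a \<Rightarrow> real) \<Rightarrow> nat \<Rightarrow> (nat \<Rightarrow> real^'n^'n) \<Rightarrow>
    (nat \<Rightarrow> real^'m^'n) \<Rightarrow> (nat \<Rightarrow> real^'n^'n) \<Rightarrow> (nat \<Rightarrow> 'a \<Rightarrow> real^'n) \<Rightarrow>
    ('a \<Rightarrow> real^'n) \<Rightarrow> (nat \<Rightarrow> 'a \<Rightarrow> real^'m) \<Rightarrow> nat \<Rightarrow> 'a \<Rightarrow> real^'n" where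
  "ybw M w N A B C q \<xi> u 0 = \<xi>"
| "ybw M w N A B C q \<xi> u (Suc j) =
     (\<lambda>x. A (N - Suc j) *v vcexp M (Fm M w (N - Suc j)) (ybw M w N A B C q \<xi> u j) x
        + B (N - Suc j) *v u (N - Suc j) x
        + C (N - Suc j) *v vcexp M (Fm M w (N - Suc j))
              (\<lambda>z. w (N - Suc j) z *\<^sub>R ybw M w N A B C q \<xi> u j z) x
        + q (N - Suc j) x)"

text \<open>The state y_k, k \<le> N, with y_N = xi.\<close>
definition state :: "'a measure \<Rightarrow> (nat \<Rightarrow> 'a \<Rightarrow> real) \<Rightarrow> nat \<Rightarrow> (nat \<Rightarrow> real^'n^'n) \<Rightarrow>
    (nat \<Rightarrow> real^'m^'n) \<Rightarrow> (nat \<Rightarrow> real^'n^'n) \<Rightarrow> (nat \<Rightarrow> 'a \<Rightarrow> real^'n) \<Rightarrow>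
    ('a \<Rightarrow> real^'n) \<Rightarrow> (nat \<Rightarrow> 'a \<Rightarrow> real^'m) \<Rightarrow> nat \<Rightarrow> 'a \<Rightarrow> real^'n" where
  "state M w N A B C q \<xi> u k = ybw M w N A B C q \<xi> u (N - k)"

text \<open>The cost functional J(N, xi; u).\<close>
definition cost :: "'a measure \<Rightarrow> (nat \<Rightarrow> 'a \<Rightarrow> real) \<Rightarrow> nat \<Rightarrow> (nat \<Rightarrow> real^'n^'n) \<Rightarrow>
    (nat \<Rightarrow> real^'m^'n) \<Rightarrow> (nat \<Rightarrow> real^'n^'n) \<Rightarrow> (nat \<Rightarrow> 'a \<Rightarrow> real^'n) \<Rightarrow>
    real^'n^'n \<Rightarrow> (nat \<Rightarrow> real^'n^'n) \<Rightarrow> (nat \<Rightarrow> real^'n^'m) \<Rightarrow> (nat \<Rightarrow> real^'m^'m) \<Rightarrow>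
    (nat \<Rightarrow> 'a \<Rightarrow> real^'n) \<Rightarrow> (nat \<Rightarrow> 'a \<Rightarrow> real^'m) \<Rightarrow>
    ('a \<Rightarrow> real^'n) \<Rightarrow> (nat \<Rightarrow> 'a \<Rightarrow> real^'m) \<Rightarrow> real" where
  "cost M w N A B C q G0 Q S R \<eta> \<rho> \<xi> u =
     (let y = state M w N A B C q \<xi> u;
          yb = (\<lambda>k. vcexp M (Fm M w k) (y (Suc k)))
      in 1/2 * integral\<^sup>L M (\<lambda>x. (G0 *v y 0 x) \<bullet> y 0 x +
           (\<Sum>k<N. (Q k *v yb k x) \<bullet> yb k x + 2 * ((S k *v yb k x) \<bullet> u k x)
               + (R k *v u k x) \<bullet> u k x + 2 * (\<eta> k x \<bullet> yb k x) + 2 * (\<rho> k x \<bullet> u k x))))"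

end

theory Submission
  imports Defs
begin

(* part 1 *)

context sigma_finite_subalgebra
begin

lemma cexp_sq:
  fixes w y :: "'a \<Rightarrow> real"
  assumes [measurable]: "w \<in> borel_measurable M" "y \<in> borel_measurable M"
    and iw: "integrable M (\<lambda>x. (w x)\<^sup>2)" and iy: "integrable M (\<lambda>x. (y x)\<^sup>2)"
    and cw: "AE x in M. real_cond_exp M F (\<lambda>x. (w x)\<^sup>2) x = 1"
  shows "integrable M (\<lambda>x. (real_cond_exp M F (\<lambda>x. w x * y x) x)\<^sup>2)"
    "(\<integral>x. (real_cond_exp M F (\<lambda>x. w x * y x) x)\<^sup>2 \<partial>M) \<le> (\<integral>x. (y x)\<^sup>2 \<partial>M)"
proof -
  define g where "g = (\<lambda>x. w x * y x)"
  have [measurable]: "g \<in> borel_measurable M" unfolding g_def by measurable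
  have ig: "integrable M g"
  proof (rule Bochner_Integration.integrable_bound[OF Bochner_Integration.integrable_add[OF iw iy]])
    show "AE x in M. norm (g x) \<le> norm ((w x)\<^sup>2 + (y x)\<^sup>2)"
    proof
      fix x
      have "\<bar>w x * y x\<bar> \<le> (w x)\<^sup>2 + (y x)\<^sup>2"
      proof -
        have "0 \<le> (\<bar>w x\<bar> - \<bar>y x\<bar>)\<^sup>2" by simp
        then have "2 * (\<bar>w x\<bar> * \<bar>y x\<bar>) \<le> (w x)\<^sup>2 + (y x)\<^sup>2"
          by (simp add: power2_eq_square algebra_simps)
        moreover have "0 \<le> \<bar>w x\<bar> * \<bar>y x\<bar>" by simp
        ultimately show ?thesis unfolding abs_mult by linarith
      qed
      then show "norm (g x) \<le> norm ((w x)\<^sup>2 + (y x)\<^sup>2)" unfolding g_def by simp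
    qed
  qed simp
  define Z where "Z = real_cond_exp M F g"
  have [measurable]: "Z \<in> borel_measurable F" "Z \<in> borel_measurable M" unfolding Z_def by measurable
  have iZ: "integrable M Z" unfolding Z_def using ig by (rule real_cond_exp_int(1))
  define Zn where "Zn = (\<lambda>(n::nat) x. if \<bar>Z x\<bar> \<le> real n then Z x else 0)"
  have [measurable]: "Zn n \<in> borel_measurable F" for n unfolding Zn_def by measurable
  have [measurable]: "Zn n \<in> borel_measurable M" for n
    by (rule measurable_from_subalg[OF subalg]) measurable
  have Znb: "\<bar>Zn n x\<bar> \<le> real n" for n x unfolding Zn_def by auto
  have iZn2: "integrable M (\<lambda>x. (Zn n x)\<^sup>2)" for n
  proof (rule Bochner_Integration.integrable_bound[OF integrable_mult_right[OF integrable_abs[OF iZ]], of _ "real n"])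
    show "AE x in M. norm ((Zn n x)\<^sup>2) \<le> norm (real n * \<bar>Z x\<bar>)"
    proof (rule AE_I2)
      fix x
      have "(Zn n x)\<^sup>2 \<le> real n * \<bar>Z x\<bar>"
      proof (cases "\<bar>Z x\<bar> \<le> real n")
        case True
        then have "\<bar>Z x\<bar> * \<bar>Z x\<bar> \<le> real n * \<bar>Z x\<bar>" by (intro mult_right_mono) auto
        then show ?thesis using True by (simp add: Zn_def power2_eq_square abs_mult_self_eq)
      qed (simp add: Zn_def)
      then show "norm ((Zn n x)\<^sup>2) \<le> norm (real n * \<bar>Z x\<bar>)" by simp
    qed
  qed simp
  have bnd: "(\<integral>x. (Zn n x)\<^sup>2 \<partial>M) \<le> (\<integral>x. (y x)\<^sup>2 \<partial>M)" for n
  proof -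
    have i1: "integrable M (\<lambda>x. Zn n x * g x)"
    proof (rule Bochner_Integration.integrable_bound[OF integrable_mult_right[OF integrable_abs[OF ig]], of _ "real n"])
      show "AE x in M. norm (Zn n x * g x) \<le> norm (real n * \<bar>g x\<bar>)"
        using Znb by (auto simp: abs_mult intro!: mult_right_mono)
    qed simp
    have e1: "(\<integral>x. Zn n x * Z x \<partial>M) = (\<integral>x. Zn n x * g x \<partial>M)"
      unfolding Z_def by (rule real_cond_exp_intg(2)[OF i1]) auto
    have "(\<lambda>x. Zn n x * Z x) = (\<lambda>x. (Zn n x)\<^sup>2)"
      by (auto simp: Zn_def power2_eq_square)
    with e1 have e2: "(\<integral>x. (Zn n x)\<^sup>2 \<partial>M) = (\<integral>x. Zn n x * g x \<partial>M)" by simp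
    have i2: "integrable M (\<lambda>x. (Zn n x)\<^sup>2 * (w x)\<^sup>2)"
    proof (rule Bochner_Integration.integrable_bound[OF integrable_mult_right[OF iw], of _ "(real n)\<^sup>2"])
      show "AE x in M. norm ((Zn n x)\<^sup>2 * (w x)\<^sup>2) \<le> norm ((real n)\<^sup>2 * (w x)\<^sup>2)"
      proof (rule AE_I2)
        fix x
        have "\<bar>Zn n x\<bar>\<^sup>2 \<le> (real n)\<^sup>2" by (rule power_mono[OF Znb abs_ge_zero])
        then have "(Zn n x)\<^sup>2 * (w x)\<^sup>2 \<le> (real n)\<^sup>2 * (w x)\<^sup>2" by (intro mult_right_mono) auto
        then show "norm ((Zn n x)\<^sup>2 * (w x)\<^sup>2) \<le> norm ((real n)\<^sup>2 * (w x)\<^sup>2)" by simp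
      qed
    qed simp
    have e3: "(\<integral>x. (Zn n x)\<^sup>2 * real_cond_exp M F (\<lambda>x. (w x)\<^sup>2) x \<partial>M) = (\<integral>x. (Zn n x)\<^sup>2 * (w x)\<^sup>2 \<partial>M)"
      by (rule real_cond_exp_intg(2)[OF i2]) auto
    have e4: "(\<integral>x. (Zn n x)\<^sup>2 * real_cond_exp M F (\<lambda>x. (w x)\<^sup>2) x \<partial>M) = (\<integral>x. (Zn n x)\<^sup>2 \<partial>M)"
      by (rule integral_cong_AE) (use cw in auto)
    have "(\<integral>x. Zn n x * g x \<partial>M) \<le> (\<integral>x. ((Zn n x)\<^sup>2 * (w x)\<^sup>2 + (y x)\<^sup>2) / 2 \<partial>M)"
    proof (rule integral_mono[OF i1])
      show "integrable M (\<lambda>x. ((Zn n x)\<^sup>2 * (w x)\<^sup>2 + (y x)\<^sup>2) / 2)"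
        using i2 iy by auto
      fix x
      have "0 \<le> (Zn n x * w x - y x)\<^sup>2" by simp
      then show "Zn n x * g x \<le> ((Zn n x)\<^sup>2 * (w x)\<^sup>2 + (y x)\<^sup>2) / 2"
        unfolding g_def by (simp add: power2_eq_square algebra_simps)
    qed
    also have "\<dots> = ((\<integral>x. (Zn n x)\<^sup>2 * (w x)\<^sup>2 \<partial>M) + (\<integral>x. (y x)\<^sup>2 \<partial>M)) / 2"
      using i2 iy by simp
    finally show ?thesis using e2 e3 e4 by simp
  qed
  have mono: "mono (\<lambda>n. (Zn n x)\<^sup>2)" for x
    by (rule monoI) (auto simp: Zn_def)
  have lim: "(\<lambda>n. (Zn n x)\<^sup>2) \<longlonglongrightarrow> (Z x)\<^sup>2" for x
  proof (rule tendsto_eventually)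
    obtain m :: nat where "\<bar>Z x\<bar> \<le> real m" using real_arch_simple by blast
    then show "\<forall>\<^sub>F n in sequentially. (Zn n x)\<^sup>2 = (Z x)\<^sup>2"
      unfolding eventually_sequentially Zn_def by (intro exI[of _ m]) auto
  qed
  have imono: "incseq (\<lambda>n. \<integral>x. (Zn n x)\<^sup>2 \<partial>M)"
    by (rule incseq_SucI, rule integral_mono[OF iZn2 iZn2]) (use mono in \<open>auto simp: mono_def\<close>)
  have bdd: "bdd_above (range (\<lambda>n. \<integral>x. (Zn n x)\<^sup>2 \<partial>M))"
    using bnd by (intro bdd_aboveI2[where M="\<integral>x. (y x)\<^sup>2 \<partial>M"]) auto
  have L: "(\<lambda>n. \<integral>x. (Zn n x)\<^sup>2 \<partial>M) \<longlonglongrightarrow> (SUP n. \<integral>x. (Zn n x)\<^sup>2 \<partial>M)"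
    by (rule LIMSEQ_incseq_SUP[OF bdd imono])
  have "integrable M (\<lambda>x. (Z x)\<^sup>2)"
    by (rule integrable_monotone_convergence[OF iZn2 _ _ L]) (use mono lim in auto)
  moreover have "(\<integral>x. (Z x)\<^sup>2 \<partial>M) = (SUP n. \<integral>x. (Zn n x)\<^sup>2 \<partial>M)"
    by (rule integral_monotone_convergence[OF iZn2 _ _ L]) (use mono lim in auto)
  moreover have "(SUP n. \<integral>x. (Zn n x)\<^sup>2 \<partial>M) \<le> (\<integral>x. (y x)\<^sup>2 \<partial>M)"
    by (rule cSUP_least) (use bnd in auto)
  ultimately show "integrable M (\<lambda>x. (real_cond_exp M F (\<lambda>x. w x * y x) x)\<^sup>2)"
    "(\<integral>x. (real_cond_exp M F (\<lambda>x. w x * y x) x)\<^sup>2 \<partial>M) \<le> (\<integral>x. (y x)\<^sup>2 \<partial>M)"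
    unfolding Z_def g_def by auto
qed

end


(* part 2 *)

definition L2v :: "'a measure \<Rightarrow> ('a \<Rightarrow> 'b::euclidean_space) \<Rightarrow> bool" where
  "L2v M f \<longleftrightarrow> f \<in> borel_measurable M \<and> integrable M (\<lambda>x. (norm (f x))\<^sup>2)"

lemma norm_sq_vec: "(norm (v::real^'d))\<^sup>2 = (\<Sum>i\<in>UNIV. (v$i)\<^sup>2)"
  by (simp add: norm_vec_def L2_set_def sum_nonneg)

lemma borel_measurable_vec_lambda:
  fixes f :: "'d::finite \<Rightarrow> 'a \<Rightarrow> real"
  assumes "\<And>i. f i \<in> borel_measurable M"
  shows "(\<lambda>x. \<chi> i. f i x) \<in> borel_measurable M"
proof -
  have "(\<lambda>x. (\<chi> i. f i x) \<bullet> b) \<in> borel_measurable M" if "b \<in> Basis" for b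
  proof -
    from that obtain i where b: "b = axis i 1" unfolding Basis_vec_def by auto
    have "(\<lambda>x. (\<chi> i. f i x) \<bullet> b) = f i" unfolding b by (simp add: inner_axis)
    then show ?thesis using assms by simp
  qed
  then show ?thesis by (subst borel_measurable_euclidean_space) auto
qed

lemma borel_measurable_vec_nth [measurable]:
  fixes f :: "'a \<Rightarrow> real^'d"
  assumes [measurable]: "f \<in> borel_measurable M"
  shows "(\<lambda>x. f x $ i) \<in> borel_measurable M"
proof -
  have "(\<lambda>x. f x $ i) = (\<lambda>x. f x \<bullet> axis i 1)" by (simp add: cart_eq_inner_axis)
  also have "\<dots> \<in> borel_measurable M" by measurable
  finally show ?thesis .
qed

lemma sq_add_le: "(norm ((a::'b::real_normed_vector) + b))\<^sup>2 \<le> 2 * (norm a)\<^sup>2 + 2 * (norm b)\<^sup>2"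
proof -
  have "norm (a + b) \<le> norm a + norm b" by (rule norm_triangle_ineq)
  then have "(norm (a + b))\<^sup>2 \<le> (norm a + norm b)\<^sup>2" by (rule power_mono) simp
  also have "\<dots> \<le> 2 * (norm a)\<^sup>2 + 2 * (norm b)\<^sup>2"
  proof -
    have "0 \<le> (norm a - norm b)\<^sup>2" by simp
    then show ?thesis by (simp add: power2_eq_square algebra_simps)
  qed
  finally show ?thesis .
qed

lemma prod_le_sq: "\<bar>(a::real) * b\<bar> \<le> a\<^sup>2 + b\<^sup>2"
proof -
  have "0 \<le> (\<bar>a\<bar> - \<bar>b\<bar>)\<^sup>2" by simp
  then have "2 * (\<bar>a\<bar> * \<bar>b\<bar>) \<le> a\<^sup>2 + b\<^sup>2" by (simp add: power2_eq_square algebra_simps)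
  moreover have "0 \<le> \<bar>a\<bar> * \<bar>b\<bar>" by simp
  ultimately show ?thesis unfolding abs_mult by linarith
qed

lemma L2v_add:
  assumes "L2v M f" "L2v M g"
  shows "L2v M (\<lambda>x. f x + g x)"
  unfolding L2v_def
proof
  show "(\<lambda>x. f x + g x) \<in> borel_measurable M" using assms unfolding L2v_def by (auto intro: borel_measurable_add)
  show "integrable M (\<lambda>x. (norm (f x + g x))\<^sup>2)"
  proof (rule Bochner_Integration.integrable_bound[of _ "\<lambda>x. 2 * (norm (f x))\<^sup>2 + 2 * (norm (g x))\<^sup>2"])
    show "integrable M (\<lambda>x. 2 * (norm (f x))\<^sup>2 + 2 * (norm (g x))\<^sup>2)" using assms unfolding L2v_def by simp
    have [measurable]: "f \<in> borel_measurable M" "g \<in> borel_measurable M" using assms unfolding L2v_def by auto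
    show "(\<lambda>x. (norm (f x + g x))\<^sup>2) \<in> borel_measurable M" by measurable
    show "AE x in M. norm ((norm (f x + g x))\<^sup>2) \<le> norm (2 * (norm (f x))\<^sup>2 + 2 * (norm (g x))\<^sup>2)"
      using sq_add_le by (auto intro!: AE_I2 simp del: real_norm_def) (smt (verit) real_norm_def zero_le_power2 sq_add_le)
  qed
qed

lemma L2v_scale:
  assumes "L2v M f"
  shows "L2v M (\<lambda>x. c *\<^sub>R f x)"
  using assms unfolding L2v_def by (auto simp: power_mult_distrib intro: borel_measurable_scaleR)

lemma L2v_zero: "L2v M (\<lambda>x. 0)"
  unfolding L2v_def by simp

lemma L2v_comb:
  assumes "L2v M f" "L2v M g"
  shows "L2v M (\<lambda>x. a *\<^sub>R f x + b *\<^sub>R g x)"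
  using L2v_add[OF L2v_scale[OF assms(1)] L2v_scale[OF assms(2)]] .

lemma L2v_diff:
  assumes "L2v M f" "L2v M g"
  shows "L2v M (\<lambda>x. f x - g x)"
  using L2v_comb[OF assms, of 1 "-1"] by simp

lemma borel_measurable_mat_vec [measurable]:
  fixes A :: "real^'p^'q"
  assumes "f \<in> borel_measurable M"
  shows "(\<lambda>x. A *v f x) \<in> borel_measurable M"
  by (rule borel_measurable_continuous_on[OF matrix_vector_mult_linear_continuous_on assms])

lemma L2v_mat:
  fixes A :: "real^'p^'q" and f :: "'a \<Rightarrow> real^'p"
  assumes "L2v M f"
  shows "L2v M (\<lambda>x. A *v f x)"
  unfolding L2v_def
proof
  have [measurable]: "f \<in> borel_measurable M" using assms unfolding L2v_def by simp
  have bl: "bounded_linear ((*v) A)" by simp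
  show "(\<lambda>x. A *v f x) \<in> borel_measurable M" by measurable
  show "integrable M (\<lambda>x. (norm (A *v f x))\<^sup>2)"
  proof (rule Bochner_Integration.integrable_bound[of _ "\<lambda>x. (onorm ((*v) A))\<^sup>2 * (norm (f x))\<^sup>2"])
    show "integrable M (\<lambda>x. (onorm ((*v) A))\<^sup>2 * (norm (f x))\<^sup>2)" using assms unfolding L2v_def by simp
    show "(\<lambda>x. (norm (A *v f x))\<^sup>2) \<in> borel_measurable M" by measurable
    show "AE x in M. norm ((norm (A *v f x))\<^sup>2) \<le> norm ((onorm ((*v) A))\<^sup>2 * (norm (f x))\<^sup>2)"
    proof (rule AE_I2)
      fix x
      have "norm (A *v f x) \<le> onorm ((*v) A) * norm (f x)" by (rule onorm[OF bl])
      then have "(norm (A *v f x))\<^sup>2 \<le> (onorm ((*v) A) * norm (f x))\<^sup>2" by (rule power_mono) simp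
      then show "norm ((norm (A *v f x))\<^sup>2) \<le> norm ((onorm ((*v) A))\<^sup>2 * (norm (f x))\<^sup>2)"
        by (simp add: power_mult_distrib)
    qed
  qed
qed

lemma L2v_inner:
  fixes f g :: "'a \<Rightarrow> real^'d"
  assumes "L2v M f" "L2v M g"
  shows "integrable M (\<lambda>x. f x \<bullet> g x)"
proof (rule Bochner_Integration.integrable_bound[of _ "\<lambda>x. (norm (f x))\<^sup>2 + (norm (g x))\<^sup>2"])
  show "integrable M (\<lambda>x. (norm (f x))\<^sup>2 + (norm (g x))\<^sup>2)" using assms unfolding L2v_def by simp
  show "(\<lambda>x. f x \<bullet> g x) \<in> borel_measurable M" using assms unfolding L2v_def by (auto intro: borel_measurable_inner)
  show "AE x in M. norm (f x \<bullet> g x) \<le> norm ((norm (f x))\<^sup>2 + (norm (g x))\<^sup>2)"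
  proof (rule AE_I2)
    fix x
    have "\<bar>f x \<bullet> g x\<bar> \<le> norm (f x) * norm (g x)" by (rule Cauchy_Schwarz_ineq2)
    also have "\<dots> \<le> (norm (f x))\<^sup>2 + (norm (g x))\<^sup>2" using prod_le_sq[of "norm (f x)" "norm (g x)"] by simp
    finally show "norm (f x \<bullet> g x) \<le> norm ((norm (f x))\<^sup>2 + (norm (g x))\<^sup>2)" by simp
  qed
qed

lemma L2v_nth:
  fixes f :: "'a \<Rightarrow> real^'d"
  assumes "L2v M f"
  shows "L2v M (\<lambda>x. f x $ i)"
  unfolding L2v_def
proof
  have [measurable]: "f \<in> borel_measurable M" using assms unfolding L2v_def by simp
  show "(\<lambda>x. f x $ i) \<in> borel_measurable M" by measurable
  show "integrable M (\<lambda>x. (norm (f x $ i))\<^sup>2)"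
  proof (rule Bochner_Integration.integrable_bound[of _ "\<lambda>x. (norm (f x))\<^sup>2"])
    show "integrable M (\<lambda>x. (norm (f x))\<^sup>2)" using assms unfolding L2v_def by simp
    show "(\<lambda>x. (norm (f x $ i))\<^sup>2) \<in> borel_measurable M" by measurable
    show "AE x in M. norm ((norm (f x $ i))\<^sup>2) \<le> norm ((norm (f x))\<^sup>2)"
    proof (rule AE_I2)
      fix x
      have "\<bar>f x $ i\<bar>\<^sup>2 \<le> (norm (f x))\<^sup>2" by (rule power_mono[OF component_le_norm_cart abs_ge_zero])
      then show "norm ((norm (f x $ i))\<^sup>2) \<le> norm ((norm (f x))\<^sup>2)" by simp
    qed
  qed
qed

lemma (in prob_space) L2v_integrable:
  fixes f :: "'a \<Rightarrow> real"
  assumes "L2v M f"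
  shows "integrable M f"
proof (rule Bochner_Integration.integrable_bound[of _ "\<lambda>x. 1 + (f x)\<^sup>2"])
  show "integrable M (\<lambda>x. 1 + (f x)\<^sup>2)" using assms unfolding L2v_def by simp
  show "f \<in> borel_measurable M" using assms unfolding L2v_def by simp
  show "AE x in M. norm (f x) \<le> norm (1 + (f x)\<^sup>2)"
  proof (rule AE_I2)
    fix x
    have "\<bar>f x\<bar> \<le> 1 + (f x)\<^sup>2" using prod_le_sq[of 1 "f x"] by simp
    then show "norm (f x) \<le> norm (1 + (f x)\<^sup>2)" by simp
  qed
qed

lemma (in prob_space) L2v_prod_integrable:
  fixes f g :: "'a \<Rightarrow> real"
  assumes "L2v M f" "L2v M g"
  shows "integrable M (\<lambda>x. f x * g x)"
proof (rule Bochner_Integration.integrable_bound[of _ "\<lambda>x. (f x)\<^sup>2 + (g x)\<^sup>2"])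
  show "integrable M (\<lambda>x. (f x)\<^sup>2 + (g x)\<^sup>2)" using assms unfolding L2v_def by simp
  show "(\<lambda>x. f x * g x) \<in> borel_measurable M" using assms unfolding L2v_def by (auto intro: borel_measurable_times)
  show "AE x in M. norm (f x * g x) \<le> norm ((f x)\<^sup>2 + (g x)\<^sup>2)"
    using prod_le_sq by (auto intro!: AE_I2)
qed



(* part 3 *)

lemma vcexp_meas_F [measurable]: "vcexp M F f \<in> borel_measurable F"
  unfolding vcexp_def by (rule borel_measurable_vec_lambda) simp

lemma vcexp_meas_M [measurable]: "vcexp M F f \<in> borel_measurable M"
  unfolding vcexp_def by (rule borel_measurable_vec_lambda) simp

lemma vcexp_nth: "vcexp M F f x $ i = real_cond_exp M F (\<lambda>z. f z $ i) x"
  unfolding vcexp_def by simp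

lemma integral_norm_sq_vec:
  fixes f :: "'a \<Rightarrow> real^'d"
  assumes "\<And>i. integrable M (\<lambda>x. (f x $ i)\<^sup>2)"
  shows "integrable M (\<lambda>x. (norm (f x))\<^sup>2)"
    "(\<integral>x. (norm (f x))\<^sup>2 \<partial>M) = (\<Sum>i\<in>UNIV. \<integral>x. (f x $ i)\<^sup>2 \<partial>M)"
proof -
  have e: "(\<lambda>x. (norm (f x))\<^sup>2) = (\<lambda>x. \<Sum>i\<in>UNIV. (f x $ i)\<^sup>2)" by (simp add: norm_sq_vec)
  show "integrable M (\<lambda>x. (norm (f x))\<^sup>2)" unfolding e using assms by simp
  show "(\<integral>x. (norm (f x))\<^sup>2 \<partial>M) = (\<Sum>i\<in>UNIV. \<integral>x. (f x $ i)\<^sup>2 \<partial>M)"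
    unfolding e using Bochner_Integration.integral_sum[where I=UNIV and M=M and f="\<lambda>i x. (f x $ i)\<^sup>2"] assms by simp
qed

context sigma_finite_subalgebra
begin

lemma vcexp_L2w:
  fixes f :: "'a \<Rightarrow> real^'d"
  assumes [measurable]: "w \<in> borel_measurable M" and iw: "integrable M (\<lambda>x. (w x)\<^sup>2)"
    and cw: "AE x in M. real_cond_exp M F (\<lambda>x. (w x)\<^sup>2) x = 1"
    and f: "L2v M f"
  shows "L2v M (vcexp M F (\<lambda>z. w z *\<^sub>R f z))"
    "(\<integral>x. (norm (vcexp M F (\<lambda>z. w z *\<^sub>R f z) x))\<^sup>2 \<partial>M) \<le> (\<integral>x. (norm (f x))\<^sup>2 \<partial>M)"
proof -
  have fi: "L2v M (\<lambda>x. f x $ i)" for i by (rule L2v_nth[OF f])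
  have [measurable]: "(\<lambda>x. f x $ i) \<in> borel_measurable M" for i using fi unfolding L2v_def by simp
  have c: "(\<lambda>x. vcexp M F (\<lambda>z. w z *\<^sub>R f z) x $ i) = real_cond_exp M F (\<lambda>x. w x * f x $ i)" for i
    by (simp add: vcexp_nth)
  have ci: "integrable M (\<lambda>x. (vcexp M F (\<lambda>z. w z *\<^sub>R f z) x $ i)\<^sup>2)"
   and cb: "(\<integral>x. (vcexp M F (\<lambda>z. w z *\<^sub>R f z) x $ i)\<^sup>2 \<partial>M) \<le> (\<integral>x. (f x $ i)\<^sup>2 \<partial>M)" for i
    using cexp_sq[of w "\<lambda>x. f x $ i", OF _ _ iw _ cw] fi unfolding L2v_def by (auto simp: vcexp_nth)
  show "L2v M (vcexp M F (\<lambda>z. w z *\<^sub>R f z))"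
    unfolding L2v_def using integral_norm_sq_vec(1)[OF ci] by simp
  have "(\<integral>x. (norm (vcexp M F (\<lambda>z. w z *\<^sub>R f z) x))\<^sup>2 \<partial>M)
      = (\<Sum>i\<in>UNIV. \<integral>x. (vcexp M F (\<lambda>z. w z *\<^sub>R f z) x $ i)\<^sup>2 \<partial>M)"
    by (rule integral_norm_sq_vec(2)[OF ci])
  also have "\<dots> \<le> (\<Sum>i\<in>UNIV. \<integral>x. (f x $ i)\<^sup>2 \<partial>M)" by (rule sum_mono[OF cb])
  also have "\<dots> = (\<integral>x. (norm (f x))\<^sup>2 \<partial>M)"
    by (rule integral_norm_sq_vec(2)[symmetric]) (use fi in \<open>simp add: L2v_def\<close>)
  finally show "(\<integral>x. (norm (vcexp M F (\<lambda>z. w z *\<^sub>R f z) x))\<^sup>2 \<partial>M) \<le> (\<integral>x. (norm (f x))\<^sup>2 \<partial>M)" .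
qed

lemma vcexp_L2:
  fixes f :: "'a \<Rightarrow> real^'d"
  assumes ps: "prob_space M" and f: "L2v M f"
  shows "L2v M (vcexp M F f)"
    "(\<integral>x. (norm (vcexp M F f x))\<^sup>2 \<partial>M) \<le> (\<integral>x. (norm (f x))\<^sup>2 \<partial>M)"
proof -
  interpret p: prob_space M by (rule ps)
  have i1: "integrable M (\<lambda>x. ((\<lambda>_. 1::real) x)\<^sup>2)" by simp
  have c1: "AE x in M. real_cond_exp M F (\<lambda>x. ((\<lambda>_. 1::real) x)\<^sup>2) x = 1"
    using real_cond_exp_F_meas[of "\<lambda>x. 1"] by simp
  have e: "(\<lambda>z. (\<lambda>_. 1::real) z *\<^sub>R f z) = f" by simp
  show "L2v M (vcexp M F f)"
    "(\<integral>x. (norm (vcexp M F f x))\<^sup>2 \<partial>M) \<le> (\<integral>x. (norm (f x))\<^sup>2 \<partial>M)"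
    using vcexp_L2w[OF _ i1 c1 f] unfolding e by auto
qed

lemma vcexp_cong:
  fixes f g :: "'a \<Rightarrow> real^'d"
  assumes "AE x in M. f x = g x" and [measurable]: "f \<in> borel_measurable M" "g \<in> borel_measurable M"
  shows "AE x in M. vcexp M F f x = vcexp M F g x"
proof -
  have "AE x in M. \<forall>i. real_cond_exp M F (\<lambda>z. f z $ i) x = real_cond_exp M F (\<lambda>z. g z $ i) x"
    by (rule eventually_all_finite, rule real_cond_exp_cong) (use assms(1) in auto)
  then show ?thesis by eventually_elim (simp add: vec_eq_iff vcexp_nth)
qed

lemma vcexp_lin:
  fixes f g :: "'a \<Rightarrow> real^'d"
  assumes "\<And>i. integrable M (\<lambda>x. f x $ i)" "\<And>i. integrable M (\<lambda>x. g x $ i)"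
  shows "AE x in M. vcexp M F (\<lambda>z. a *\<^sub>R f z + b *\<^sub>R g z) x = a *\<^sub>R vcexp M F f x + b *\<^sub>R vcexp M F g x"
proof -
  have "AE x in M. \<forall>i. real_cond_exp M F (\<lambda>z. a * f z $ i + b * g z $ i) x
        = a * real_cond_exp M F (\<lambda>z. f z $ i) x + b * real_cond_exp M F (\<lambda>z. g z $ i) x"
  proof (rule eventually_all_finite)
    fix i
    have "AE x in M. real_cond_exp M F (\<lambda>z. a * f z $ i + b * g z $ i) x
        = real_cond_exp M F (\<lambda>z. a * f z $ i) x + real_cond_exp M F (\<lambda>z. b * g z $ i) x"
      by (rule real_cond_exp_add) (use assms in auto)
    moreover have "AE x in M. real_cond_exp M F (\<lambda>z. a * f z $ i) x = a * real_cond_exp M F (\<lambda>z. f z $ i) x"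
      by (rule real_cond_exp_cmult) (use assms in auto)
    moreover have "AE x in M. real_cond_exp M F (\<lambda>z. b * g z $ i) x = b * real_cond_exp M F (\<lambda>z. g z $ i) x"
      by (rule real_cond_exp_cmult) (use assms in auto)
    ultimately show "AE x in M. real_cond_exp M F (\<lambda>z. a * f z $ i + b * g z $ i) x
        = a * real_cond_exp M F (\<lambda>z. f z $ i) x + b * real_cond_exp M F (\<lambda>z. g z $ i) x"
      by eventually_elim simp
  qed
  then show ?thesis by eventually_elim (simp add: vec_eq_iff vcexp_nth)
qed

end


(* part 4 *)

lemma sigma_subalg:
  assumes "G \<subseteq> sets M"
  shows "subalgebra M (sigma (space M) G)"
proof -
  have "G \<subseteq> Pow (space M)" using assms sets.sets_into_space by blast
  then show ?thesis unfolding subalgebra_def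
    using sets.sigma_sets_subset[OF assms] by (simp add: sets_measure_of space_measure_of)
qed

lemma mat_sq_bound:
  fixes A :: "real^'p^'q"
  shows "(norm (A *v x))\<^sup>2 \<le> (onorm ((*v) A))\<^sup>2 * (norm x)\<^sup>2"
proof -
  have "norm (A *v x) \<le> onorm ((*v) A) * norm x" by (rule onorm) simp
  then have "(norm (A *v x))\<^sup>2 \<le> (onorm ((*v) A) * norm x)\<^sup>2" by (rule power_mono) simp
  then show ?thesis by (simp add: power_mult_distrib)
qed

locale lqs =
  fixes M :: "'a measure" and w :: "nat \<Rightarrow> 'a \<Rightarrow> real" and N :: nat
    and A C :: "nat \<Rightarrow> real^'n^'n" and B :: "nat \<Rightarrow> real^'m^'n"
  assumes ps: "prob_space M"
    and wm: "\<And>k. k < N \<Longrightarrow> w k \<in> borel_measurable M"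
    and wi: "\<And>k. k < N \<Longrightarrow> integrable M (\<lambda>x. (w k x)\<^sup>2)"
    and w2: "\<And>k. k < N \<Longrightarrow> AE x in M. real_cond_exp M (Fm M w k) (\<lambda>z. (w k z)\<^sup>2) x = 1"
begin

interpretation p: prob_space M by (rule ps)

lemma Fm_sub:
  assumes "k \<le> N"
  shows "subalgebra M (Fm M w k)"
proof (cases "k = 0")
  case True
  then show ?thesis unfolding Fm_def by (simp add: sigma_subalg)
next
  case False
  have "{w i -` B \<inter> space M | i B. i < k \<and> B \<in> sets borel} \<union> null_sets M \<subseteq> sets M"
    using wm assms by (auto intro!: measurable_sets)
  then show ?thesis using False unfolding Fm_def by (simp add: sigma_subalg)
qed

lemma Fm_sfs:
  assumes "k \<le> N"
  shows "sigma_finite_subalgebra M (Fm M w k)"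
proof -
  have "finite_measure_subalgebra M (Fm M w k)"
    unfolding finite_measure_subalgebra_def finite_measure_subalgebra_axioms_def
    using Fm_sub[OF assms] p.finite_measure_axioms by simp
  then show ?thesis by (rule finite_measure_subalgebra_is_sigma_finite)
qed

abbreviation Y where "Y q \<xi> u j \<equiv> ybw M w N A B C q \<xi> u j"

definition Isq :: "(nat \<Rightarrow> 'a \<Rightarrow> real^'m) \<Rightarrow> real" where
  "Isq u = (\<integral>x. (\<Sum>k<N. (norm (u k x))\<^sup>2) \<partial>M)"

lemma Isq_ge:
  assumes "\<forall>k<N. L2v M (u k)" "k < N"
  shows "(\<integral>x. (norm (u k x))\<^sup>2 \<partial>M) \<le> Isq u"
  unfolding Isq_def
proof (rule integral_mono)
  show "integrable M (\<lambda>x. (norm (u k x))\<^sup>2)" using assms unfolding L2v_def by simp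
  show "integrable M (\<lambda>x. \<Sum>k<N. (norm (u k x))\<^sup>2)"
    by (intro Bochner_Integration.integrable_sum) (use assms in \<open>auto simp: L2v_def\<close>)
  fix x show "(norm (u k x))\<^sup>2 \<le> (\<Sum>k<N. (norm (u k x))\<^sup>2)"
    by (rule member_le_sum) (use assms in auto)
qed

lemma Y_L2:
  assumes "L2v M \<xi>" "\<forall>k<N. L2v M (q k)" "\<forall>k<N. L2v M (u k)"
  shows "j \<le> N \<Longrightarrow> L2v M (Y q \<xi> u j)"
proof (induction j)
  case 0
  then show ?case using assms by simp
next
  case (Suc j)
  define k where "k = N - Suc j"
  have k: "k < N" "k \<le> N" using Suc.prems unfolding k_def by auto
  interpret s: sigma_finite_subalgebra M "Fm M w k" by (rule Fm_sfs[OF k(2)])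
  have IH: "L2v M (Y q \<xi> u j)" using Suc by simp
  have a: "L2v M (vcexp M (Fm M w k) (Y q \<xi> u j))" by (rule s.vcexp_L2(1)[OF ps IH])
  have c: "L2v M (vcexp M (Fm M w k) (\<lambda>z. w k z *\<^sub>R Y q \<xi> u j z))"
    by (rule s.vcexp_L2w(1)[OF wm[OF k(1)] wi[OF k(1)] w2[OF k(1)] IH])
  have "L2v M (\<lambda>x. A k *v vcexp M (Fm M w k) (Y q \<xi> u j) x + B k *v u k x
        + C k *v vcexp M (Fm M w k) (\<lambda>z. w k z *\<^sub>R Y q \<xi> u j z) x + q k x)"
    by (intro L2v_add L2v_mat a c) (use assms k in auto)
  then show ?case unfolding k_def by simp
qed

lemma Y_bound:
  assumes "j \<le> N"
  shows "\<exists>D\<ge>0. \<forall>u. (\<forall>k<N. L2v M (u k)) \<longrightarrow>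
     (\<integral>x. (norm (Y (\<lambda>_ _. 0) (\<lambda>_. 0) u j x))\<^sup>2 \<partial>M) \<le> D * Isq u"
  using assms
proof (induction j)
  case 0
  then show ?case by (intro exI[of _ 0]) simp
next
  case (Suc j)
  define k where "k = N - Suc j"
  have k: "k < N" "k \<le> N" using Suc.prems unfolding k_def by auto
  interpret s: sigma_finite_subalgebra M "Fm M w k" by (rule Fm_sfs[OF k(2)])
  obtain D where D: "D \<ge> 0" "\<And>u. \<forall>k<N. L2v M (u k) \<Longrightarrow>
     (\<integral>x. (norm (Y (\<lambda>_ _. 0) (\<lambda>_. 0) u j x))\<^sup>2 \<partial>M) \<le> D * Isq u"
    using Suc by auto
  define KA where "KA = (onorm ((*v) (A k)))\<^sup>2"
  define KB where "KB = (onorm ((*v) (B k)))\<^sup>2"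
  define KC where "KC = (onorm ((*v) (C k)))\<^sup>2"
  have K: "KA \<ge> 0" "KB \<ge> 0" "KC \<ge> 0" unfolding KA_def KB_def KC_def by auto
  show ?case
  proof (intro exI[of _ "4 * KA * D + 4 * KB + 2 * KC * D"] conjI allI impI)
    show "0 \<le> 4 * KA * D + 4 * KB + 2 * KC * D" using K D by simp
    fix u :: "nat \<Rightarrow> 'a \<Rightarrow> real^'m"
    assume u: "\<forall>k<N. L2v M (u k)"
    define Z where "Z = Y (\<lambda>_ _. 0) (\<lambda>_. 0) u j"
    have Z: "L2v M Z" unfolding Z_def by (rule Y_L2) (use u Suc.prems L2v_zero in auto)
    define a where "a = vcexp M (Fm M w k) Z"
    define c where "c = vcexp M (Fm M w k) (\<lambda>z. w k z *\<^sub>R Z z)"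
    have a: "L2v M a" "(\<integral>x. (norm (a x))\<^sup>2 \<partial>M) \<le> (\<integral>x. (norm (Z x))\<^sup>2 \<partial>M)"
      unfolding a_def by (rule s.vcexp_L2[OF ps Z])+
    have c: "L2v M c" "(\<integral>x. (norm (c x))\<^sup>2 \<partial>M) \<le> (\<integral>x. (norm (Z x))\<^sup>2 \<partial>M)"
      unfolding c_def by (rule s.vcexp_L2w[OF wm[OF k(1)] wi[OF k(1)] w2[OF k(1)] Z])+
    have e: "Y (\<lambda>_ _. 0) (\<lambda>_. 0) u (Suc j) = (\<lambda>x. A k *v a x + B k *v u k x + C k *v c x)"
      unfolding a_def c_def Z_def k_def by simp
    have ub: "(\<integral>x. (norm (u k x))\<^sup>2 \<partial>M) \<le> Isq u" by (rule Isq_ge[OF u k(1)])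
    have Lu: "L2v M (u k)" using u k by simp
    have "(\<integral>x. (norm (A k *v a x + B k *v u k x + C k *v c x))\<^sup>2 \<partial>M)
        \<le> (\<integral>x. 4 * KA * (norm (a x))\<^sup>2 + 4 * KB * (norm (u k x))\<^sup>2 + 2 * KC * (norm (c x))\<^sup>2 \<partial>M)"
    proof (rule integral_mono)
      show "integrable M (\<lambda>x. (norm (A k *v a x + B k *v u k x + C k *v c x))\<^sup>2)"
        using L2v_add[OF L2v_add[OF L2v_mat[OF a(1), of "A k"] L2v_mat[OF Lu, of "B k"]] L2v_mat[OF c(1), of "C k"]]
        unfolding L2v_def by simp
      show "integrable M (\<lambda>x. 4 * KA * (norm (a x))\<^sup>2 + 4 * KB * (norm (u k x))\<^sup>2 + 2 * KC * (norm (c x))\<^sup>2)"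
        using a(1) c(1) Lu unfolding L2v_def by simp
      fix x
      have "(norm (A k *v a x + B k *v u k x + C k *v c x))\<^sup>2
          \<le> 2 * (norm (A k *v a x + B k *v u k x))\<^sup>2 + 2 * (norm (C k *v c x))\<^sup>2" by (rule sq_add_le)
      also have "\<dots> \<le> 2 * (2 * (norm (A k *v a x))\<^sup>2 + 2 * (norm (B k *v u k x))\<^sup>2) + 2 * (norm (C k *v c x))\<^sup>2"
        using sq_add_le[of "A k *v a x" "B k *v u k x"] by simp
      also have "\<dots> \<le> 4 * KA * (norm (a x))\<^sup>2 + 4 * KB * (norm (u k x))\<^sup>2 + 2 * KC * (norm (c x))\<^sup>2"
        using mat_sq_bound[of "A k" "a x"] mat_sq_bound[of "B k" "u k x"] mat_sq_bound[of "C k" "c x"]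
        unfolding KA_def KB_def KC_def by simp
      finally show "(norm (A k *v a x + B k *v u k x + C k *v c x))\<^sup>2
          \<le> 4 * KA * (norm (a x))\<^sup>2 + 4 * KB * (norm (u k x))\<^sup>2 + 2 * KC * (norm (c x))\<^sup>2" .
    qed
    also have "\<dots> = 4 * KA * (\<integral>x. (norm (a x))\<^sup>2 \<partial>M) + 4 * KB * (\<integral>x. (norm (u k x))\<^sup>2 \<partial>M)
        + 2 * KC * (\<integral>x. (norm (c x))\<^sup>2 \<partial>M)"
      using a(1) c(1) Lu unfolding L2v_def by simp
    also have "\<dots> \<le> 4 * KA * (D * Isq u) + 4 * KB * Isq u + 2 * KC * (D * Isq u)"
    proof -
      have zb: "(\<integral>x. (norm (Z x))\<^sup>2 \<partial>M) \<le> D * Isq u" unfolding Z_def by (rule D(2)[OF u])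
      show ?thesis
        by (intro add_mono mult_left_mono order_trans[OF a(2) zb] order_trans[OF c(2) zb] ub)
           (use K in auto)
    qed
    also have "\<dots> = (4 * KA * D + 4 * KB + 2 * KC * D) * Isq u" by (simp add: algebra_simps)
    finally show "(\<integral>x. (norm (Y (\<lambda>_ _. 0) (\<lambda>_. 0) u (Suc j) x))\<^sup>2 \<partial>M)
        \<le> (4 * KA * D + 4 * KB + 2 * KC * D) * Isq u" unfolding e .
  qed
qed

end


(* part 5 *)

context lqs
begin

interpretation p: prob_space M by (rule ps)

lemma w_L2: "k < N \<Longrightarrow> L2v M (w k)"
  unfolding L2v_def using wm wi by simp

lemma Y_lin:
  assumes d1: "L2v M \<xi>1" "\<forall>k<N. L2v M (q1 k)" "\<forall>k<N. L2v M (u1 k)"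
    and d2: "L2v M \<xi>2" "\<forall>k<N. L2v M (q2 k)" "\<forall>k<N. L2v M (u2 k)"
    and e: "\<xi> = (\<lambda>x. \<alpha> *\<^sub>R \<xi>1 x + \<beta> *\<^sub>R \<xi>2 x)"
      "\<forall>k<N. q k = (\<lambda>x. \<alpha> *\<^sub>R q1 k x + \<beta> *\<^sub>R q2 k x)"
      "\<forall>k<N. u k = (\<lambda>x. \<alpha> *\<^sub>R u1 k x + \<beta> *\<^sub>R u2 k x)"
  shows "j \<le> N \<Longrightarrow> AE x in M. Y q \<xi> u j x = \<alpha> *\<^sub>R Y q1 \<xi>1 u1 j x + \<beta> *\<^sub>R Y q2 \<xi>2 u2 j x"
proof (induction j)
  case 0
  then show ?case using e(1) by simp
next
  case (Suc j)
  define k where "k = N - Suc j"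
  have k: "k < N" "k \<le> N" using Suc.prems unfolding k_def by auto
  interpret s: sigma_finite_subalgebra M "Fm M w k" by (rule Fm_sfs[OF k(2)])
  have d: "L2v M \<xi>" "\<forall>k<N. L2v M (q k)" "\<forall>k<N. L2v M (u k)"
    using e d1 d2 by (auto intro: L2v_comb)
  define Z where "Z = Y q \<xi> u j"
  define Z1 where "Z1 = Y q1 \<xi>1 u1 j"
  define Z2 where "Z2 = Y q2 \<xi>2 u2 j"
  have L: "L2v M Z" "L2v M Z1" "L2v M Z2"
    unfolding Z_def Z1_def Z2_def using Suc.prems by (intro Y_L2 d d1 d2; simp)+
  have [measurable]: "Z \<in> borel_measurable M" "Z1 \<in> borel_measurable M" "Z2 \<in> borel_measurable M"
    using L unfolding L2v_def by auto
  have [measurable]: "w k \<in> borel_measurable M" using wm k by simp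
  have IH: "AE x in M. Z x = \<alpha> *\<^sub>R Z1 x + \<beta> *\<^sub>R Z2 x"
    unfolding Z_def Z1_def Z2_def using Suc by simp
  have h1: "AE x in M. vcexp M (Fm M w k) Z x = vcexp M (Fm M w k) (\<lambda>z. \<alpha> *\<^sub>R Z1 z + \<beta> *\<^sub>R Z2 z) x"
    by (rule s.vcexp_cong[OF IH]) auto
  have h2: "AE x in M. vcexp M (Fm M w k) (\<lambda>z. \<alpha> *\<^sub>R Z1 z + \<beta> *\<^sub>R Z2 z) x
      = \<alpha> *\<^sub>R vcexp M (Fm M w k) Z1 x + \<beta> *\<^sub>R vcexp M (Fm M w k) Z2 x"
    by (rule s.vcexp_lin) (use L in \<open>auto intro: p.L2v_integrable L2v_nth\<close>)
  have IH': "AE x in M. w k x *\<^sub>R Z x = \<alpha> *\<^sub>R (w k x *\<^sub>R Z1 x) + \<beta> *\<^sub>R (w k x *\<^sub>R Z2 x)"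
    using IH by eventually_elim (simp add: algebra_simps)
  have h3: "AE x in M. vcexp M (Fm M w k) (\<lambda>z. w k z *\<^sub>R Z z) x
      = vcexp M (Fm M w k) (\<lambda>z. \<alpha> *\<^sub>R (w k z *\<^sub>R Z1 z) + \<beta> *\<^sub>R (w k z *\<^sub>R Z2 z)) x"
    by (rule s.vcexp_cong[OF IH']) auto
  have h4: "AE x in M. vcexp M (Fm M w k) (\<lambda>z. \<alpha> *\<^sub>R (w k z *\<^sub>R Z1 z) + \<beta> *\<^sub>R (w k z *\<^sub>R Z2 z)) x
      = \<alpha> *\<^sub>R vcexp M (Fm M w k) (\<lambda>z. w k z *\<^sub>R Z1 z) x + \<beta> *\<^sub>R vcexp M (Fm M w k) (\<lambda>z. w k z *\<^sub>R Z2 z) x"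
  proof (rule s.vcexp_lin)
    fix i
    show "integrable M (\<lambda>x. (w k x *\<^sub>R Z1 x) $ i)"
      using p.L2v_prod_integrable[OF w_L2[OF k(1)] L2v_nth[OF L(2)]] by simp
    show "integrable M (\<lambda>x. (w k x *\<^sub>R Z2 x) $ i)"
      using p.L2v_prod_integrable[OF w_L2[OF k(1)] L2v_nth[OF L(3)]] by simp
  qed
  have ek: "N - Suc j = k" unfolding k_def by simp
  have uq: "u k = (\<lambda>x. \<alpha> *\<^sub>R u1 k x + \<beta> *\<^sub>R u2 k x)" "q k = (\<lambda>x. \<alpha> *\<^sub>R q1 k x + \<beta> *\<^sub>R q2 k x)"
    using e k by auto
  from h1 h2 h3 h4 show ?case
  proof eventually_elim
    case (elim x)
    show ?case
      unfolding ybw.simps ek Z_def[symmetric] Z1_def[symmetric] Z2_def[symmetric] uq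
      using elim by (simp add: algebra_simps)
  qed
qed

end


(* part 6 *)

definition Phi :: "real^'n^'n \<Rightarrow> (nat \<Rightarrow> real^'n^'n) \<Rightarrow> (nat \<Rightarrow> real^'n^'m) \<Rightarrow> (nat \<Rightarrow> real^'m^'m) \<Rightarrow> nat
   \<Rightarrow> real^'n \<Rightarrow> (nat \<Rightarrow> real^'n) \<Rightarrow> (nat \<Rightarrow> real^'m) \<Rightarrow> (nat \<Rightarrow> real^'n) \<Rightarrow> (nat \<Rightarrow> real^'m) \<Rightarrow> real" where
  "Phi G0 Q S R N y0 yb u eta rho = (G0 *v y0) \<bullet> y0 +
     (\<Sum>k<N. (Q k *v yb k) \<bullet> yb k + 2 * ((S k *v yb k) \<bullet> u k)
               + (R k *v u k) \<bullet> u k + 2 * (eta k \<bullet> yb k) + 2 * (rho k \<bullet> u k))"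

lemma bil_conv:
  fixes G :: "real^'p^'q"
  assumes "t + s = 1"
  shows "(G *v (t *\<^sub>R a + s *\<^sub>R b)) \<bullet> (t *\<^sub>R c + s *\<^sub>R d)
    = t * ((G *v a) \<bullet> c) + s * ((G *v b) \<bullet> d) - t * s * ((G *v (a - b)) \<bullet> (c - d))"
proof -
  have s: "s = 1 - t" using assms by simp
  show ?thesis unfolding s
    by (simp add: matrix_vector_right_distrib matrix_vector_mult_scaleR matrix_vector_mult_diff_distrib
        inner_add_left inner_add_right inner_diff_left inner_diff_right algebra_simps)
qed

lemma lin_conv:
  assumes "t + s = 1"
  shows "e \<bullet> (t *\<^sub>R a + s *\<^sub>R b) = t * (e \<bullet> a) + s * (e \<bullet> b) - t * s * (0 \<bullet> (a - b))"
  by (simp add: inner_add_right)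

lemma sum_lin3: "(\<Sum>k\<in>A. t * f k + s * g k - c * h k) = t * sum f A + s * sum g A - c * sum h A"
  for t s c :: real
  by (simp add: sum.distrib sum_subtractf sum_distrib_left)

lemma sum_lin4: "(\<Sum>k\<in>A. f k + g k - c * h k - d * l k) = sum f A + sum g A - c * sum h A - d * sum l A"
  for c d :: real
  by (simp add: sum.distrib sum_subtractf sum_distrib_left)

lemma Phi_conv:
  assumes ts: "t + s = 1"
  shows "Phi G0 Q S R N (t *\<^sub>R a0 + s *\<^sub>R b0) (\<lambda>k. t *\<^sub>R ayb k + s *\<^sub>R byb k) (\<lambda>k. t *\<^sub>R au k + s *\<^sub>R bu k) eta rho
    = t * Phi G0 Q S R N a0 ayb au eta rho + s * Phi G0 Q S R N b0 byb bu eta rho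
      - t * s * Phi G0 Q S R N (a0 - b0) (\<lambda>k. ayb k - byb k) (\<lambda>k. au k - bu k) (\<lambda>k. 0) (\<lambda>k. 0)"
proof -
  have "(\<Sum>k<N. (Q k *v (t *\<^sub>R ayb k + s *\<^sub>R byb k)) \<bullet> (t *\<^sub>R ayb k + s *\<^sub>R byb k)
          + 2 * ((S k *v (t *\<^sub>R ayb k + s *\<^sub>R byb k)) \<bullet> (t *\<^sub>R au k + s *\<^sub>R bu k))
          + (R k *v (t *\<^sub>R au k + s *\<^sub>R bu k)) \<bullet> (t *\<^sub>R au k + s *\<^sub>R bu k)
          + 2 * (eta k \<bullet> (t *\<^sub>R ayb k + s *\<^sub>R byb k)) + 2 * (rho k \<bullet> (t *\<^sub>R au k + s *\<^sub>R bu k)))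
      = (\<Sum>k<N. t * ((Q k *v ayb k) \<bullet> ayb k + 2 * ((S k *v ayb k) \<bullet> au k) + (R k *v au k) \<bullet> au k
                  + 2 * (eta k \<bullet> ayb k) + 2 * (rho k \<bullet> au k))
             + s * ((Q k *v byb k) \<bullet> byb k + 2 * ((S k *v byb k) \<bullet> bu k) + (R k *v bu k) \<bullet> bu k
                  + 2 * (eta k \<bullet> byb k) + 2 * (rho k \<bullet> bu k))
             - t * s * ((Q k *v (ayb k - byb k)) \<bullet> (ayb k - byb k) + 2 * ((S k *v (ayb k - byb k)) \<bullet> (au k - bu k))
                  + (R k *v (au k - bu k)) \<bullet> (au k - bu k) + 2 * (0 \<bullet> (ayb k - byb k)) + 2 * (0 \<bullet> (au k - bu k))))"
    (is "sum ?f _ = sum ?g _")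
  proof (rule sum.cong[OF refl])
    fix k
    show "?f k = ?g k"
      unfolding bil_conv[OF ts] lin_conv[OF ts, of "eta k"] lin_conv[OF ts, of "rho k"]
      by (simp add: algebra_simps)
  qed
  also have "\<dots> = t * (\<Sum>k<N. (Q k *v ayb k) \<bullet> ayb k + 2 * ((S k *v ayb k) \<bullet> au k) + (R k *v au k) \<bullet> au k
                  + 2 * (eta k \<bullet> ayb k) + 2 * (rho k \<bullet> au k))
             + s * (\<Sum>k<N. (Q k *v byb k) \<bullet> byb k + 2 * ((S k *v byb k) \<bullet> bu k) + (R k *v bu k) \<bullet> bu k
                  + 2 * (eta k \<bullet> byb k) + 2 * (rho k \<bullet> bu k))
             - t * s * (\<Sum>k<N. (Q k *v (ayb k - byb k)) \<bullet> (ayb k - byb k) + 2 * ((S k *v (ayb k - byb k)) \<bullet> (au k - bu k))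
                  + (R k *v (au k - bu k)) \<bullet> (au k - bu k) + 2 * (0 \<bullet> (ayb k - byb k)) + 2 * (0 \<bullet> (au k - bu k)))"
    by (rule sum_lin3)
  finally show ?thesis
    unfolding Phi_def bil_conv[OF ts] by (simp add: algebra_simps)
qed

lemma amgm: "0 < e \<Longrightarrow> 2 * (a * b) \<le> a\<^sup>2 / e + e * b\<^sup>2" for a b e :: real
proof -
  assume e: "0 < e"
  have "0 \<le> (a - e * b)\<^sup>2 / e" using e by simp
  also have "(a - e * b)\<^sup>2 / e = a\<^sup>2 / e + e * b\<^sup>2 - 2 * (a * b)"
    using e by (simp add: power2_eq_square field_simps)
  finally show ?thesis by simp
qed

lemma bil_abs:
  fixes G :: "real^'p^'q"
  assumes "norm (G *v x) \<le> K * norm x"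
  shows "\<bar>(G *v x) \<bullet> y\<bar> \<le> K * norm x * norm y"
proof -
  have "\<bar>(G *v x) \<bullet> y\<bar> \<le> norm (G *v x) * norm y" by (rule Cauchy_Schwarz_ineq2)
  also have "\<dots> \<le> K * norm x * norm y" using assms by (simp add: mult_right_mono)
  finally show ?thesis .
qed

lemma amgmK:
  fixes K a b e :: real
  assumes "0 < e"
  shows "2 * (K * a * b) \<le> K\<^sup>2 / e * a\<^sup>2 + e * b\<^sup>2"
  using amgm[OF assms, of "K * a" b] by (simp add: power_mult_distrib mult.assoc)

lemma Phi_split:
  fixes G0 :: "real^'n^'n" and S :: "nat \<Rightarrow> real^'n^'m"
  assumes e: "0 < e" and K1: "1 \<le> K"
    and KG: "\<And>x. norm (G0 *v x) \<le> K * norm x"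
    and KQ: "\<And>k x. k < N \<Longrightarrow> norm (Q k *v x) \<le> K * norm x"
    and KS: "\<And>k x. k < N \<Longrightarrow> norm (S k *v x) \<le> K * norm x"
  shows "Phi G0 Q S R N (a0 + b0) (\<lambda>k. ayb k + byb k) u eta rho
    \<ge> Phi G0 Q S R N a0 ayb (\<lambda>k. 0) eta rho + Phi G0 Q S R N b0 byb u (\<lambda>k. 0) (\<lambda>k. 0)
      - K\<^sup>2 / e * ((norm a0)\<^sup>2 + (\<Sum>k<N. 2 * (norm (ayb k))\<^sup>2 + (norm (eta k))\<^sup>2 + (norm (rho k))\<^sup>2))
      - e * ((norm b0)\<^sup>2 + (\<Sum>k<N. 2 * (norm (byb k))\<^sup>2 + 2 * (norm (u k))\<^sup>2))"
proof -
  have g: "(G0 *v (a0 + b0)) \<bullet> (a0 + b0) \<ge> (G0 *v a0) \<bullet> a0 + (G0 *v b0) \<bullet> b0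
      - K\<^sup>2 / e * (norm a0)\<^sup>2 - e * (norm b0)\<^sup>2"
  proof -
    have eq: "(G0 *v (a0 + b0)) \<bullet> (a0 + b0) = (G0 *v a0) \<bullet> a0 + (G0 *v b0) \<bullet> b0 + (G0 *v a0) \<bullet> b0 + (G0 *v b0) \<bullet> a0"
      by (simp add: matrix_vector_right_distrib inner_add_left inner_add_right)
    have "\<bar>(G0 *v a0) \<bullet> b0\<bar> \<le> K * norm a0 * norm b0" by (rule bil_abs[OF KG])
    moreover have "\<bar>(G0 *v b0) \<bullet> a0\<bar> \<le> K * norm b0 * norm a0" by (rule bil_abs[OF KG])
    moreover have "2 * (K * norm a0 * norm b0) \<le> K\<^sup>2 / e * (norm a0)\<^sup>2 + e * (norm b0)\<^sup>2" by (rule amgmK[OF e])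
    ultimately show ?thesis unfolding eq by (simp add: mult_ac)
  qed
  have t: "(Q k *v (ayb k + byb k)) \<bullet> (ayb k + byb k) + 2 * ((S k *v (ayb k + byb k)) \<bullet> u k)
          + (R k *v u k) \<bullet> u k + 2 * (eta k \<bullet> (ayb k + byb k)) + 2 * (rho k \<bullet> u k)
      \<ge> ((Q k *v ayb k) \<bullet> ayb k + 2 * ((S k *v ayb k) \<bullet> 0) + (R k *v 0) \<bullet> 0 + 2 * (eta k \<bullet> ayb k) + 2 * (rho k \<bullet> 0))
        + ((Q k *v byb k) \<bullet> byb k + 2 * ((S k *v byb k) \<bullet> u k) + (R k *v u k) \<bullet> u k + 2 * (0 \<bullet> byb k) + 2 * (0 \<bullet> u k))
        - K\<^sup>2 / e * (2 * (norm (ayb k))\<^sup>2 + (norm (eta k))\<^sup>2 + (norm (rho k))\<^sup>2)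
        - e * (2 * (norm (byb k))\<^sup>2 + 2 * (norm (u k))\<^sup>2)"
    if k: "k < N" for k
  proof -
    have eq: "(Q k *v (ayb k + byb k)) \<bullet> (ayb k + byb k) + 2 * ((S k *v (ayb k + byb k)) \<bullet> u k)
          + (R k *v u k) \<bullet> u k + 2 * (eta k \<bullet> (ayb k + byb k)) + 2 * (rho k \<bullet> u k)
       = ((Q k *v ayb k) \<bullet> ayb k + 2 * (eta k \<bullet> ayb k))
        + ((Q k *v byb k) \<bullet> byb k + 2 * ((S k *v byb k) \<bullet> u k) + (R k *v u k) \<bullet> u k)
        + (Q k *v ayb k) \<bullet> byb k + (Q k *v byb k) \<bullet> ayb k + 2 * ((S k *v ayb k) \<bullet> u k)
        + 2 * (eta k \<bullet> byb k) + 2 * (rho k \<bullet> u k)"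
      by (simp add: matrix_vector_right_distrib inner_add_left inner_add_right algebra_simps)
    have b1: "\<bar>(Q k *v ayb k) \<bullet> byb k\<bar> \<le> K * norm (ayb k) * norm (byb k)" by (rule bil_abs[OF KQ[OF k]])
    have b2: "\<bar>(Q k *v byb k) \<bullet> ayb k\<bar> \<le> K * norm (ayb k) * norm (byb k)"
      using bil_abs[OF KQ[OF k], of "byb k" "ayb k"] by (simp add: mult_ac)
    have b3: "\<bar>(S k *v ayb k) \<bullet> u k\<bar> \<le> K * norm (ayb k) * norm (u k)" by (rule bil_abs[OF KS[OF k]])
    have b4: "\<bar>eta k \<bullet> byb k\<bar> \<le> K * norm (eta k) * norm (byb k)"
    proof -
      have "\<bar>eta k \<bullet> byb k\<bar> \<le> norm (eta k) * norm (byb k)" by (rule Cauchy_Schwarz_ineq2)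
      also have "\<dots> \<le> K * (norm (eta k) * norm (byb k))"
        using mult_right_mono[OF K1, of "norm (eta k) * norm (byb k)"] by simp
      finally show ?thesis by (simp add: mult_ac)
    qed
    have b5: "\<bar>rho k \<bullet> u k\<bar> \<le> K * norm (rho k) * norm (u k)"
    proof -
      have "\<bar>rho k \<bullet> u k\<bar> \<le> norm (rho k) * norm (u k)" by (rule Cauchy_Schwarz_ineq2)
      also have "\<dots> \<le> K * (norm (rho k) * norm (u k))"
        using mult_right_mono[OF K1, of "norm (rho k) * norm (u k)"] by simp
      finally show ?thesis by (simp add: mult_ac)
    qed
    have m1: "2 * (K * norm (ayb k) * norm (byb k)) \<le> K\<^sup>2 / e * (norm (ayb k))\<^sup>2 + e * (norm (byb k))\<^sup>2" by (rule amgmK[OF e])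
    have m2: "2 * (K * norm (ayb k) * norm (u k)) \<le> K\<^sup>2 / e * (norm (ayb k))\<^sup>2 + e * (norm (u k))\<^sup>2" by (rule amgmK[OF e])
    have m3: "2 * (K * norm (eta k) * norm (byb k)) \<le> K\<^sup>2 / e * (norm (eta k))\<^sup>2 + e * (norm (byb k))\<^sup>2" by (rule amgmK[OF e])
    have m4: "2 * (K * norm (rho k) * norm (u k)) \<le> K\<^sup>2 / e * (norm (rho k))\<^sup>2 + e * (norm (u k))\<^sup>2" by (rule amgmK[OF e])
    show ?thesis unfolding eq using b1 b2 b3 b4 b5 m1 m2 m3 m4 by (simp add: algebra_simps)
  qed
  have "(\<Sum>k<N. (Q k *v (ayb k + byb k)) \<bullet> (ayb k + byb k) + 2 * ((S k *v (ayb k + byb k)) \<bullet> u k)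
          + (R k *v u k) \<bullet> u k + 2 * (eta k \<bullet> (ayb k + byb k)) + 2 * (rho k \<bullet> u k))
      \<ge> (\<Sum>k<N. ((Q k *v ayb k) \<bullet> ayb k + 2 * ((S k *v ayb k) \<bullet> 0) + (R k *v 0) \<bullet> 0 + 2 * (eta k \<bullet> ayb k) + 2 * (rho k \<bullet> 0))
        + ((Q k *v byb k) \<bullet> byb k + 2 * ((S k *v byb k) \<bullet> u k) + (R k *v u k) \<bullet> u k + 2 * (0 \<bullet> byb k) + 2 * (0 \<bullet> u k))
        - K\<^sup>2 / e * (2 * (norm (ayb k))\<^sup>2 + (norm (eta k))\<^sup>2 + (norm (rho k))\<^sup>2)
        - e * (2 * (norm (byb k))\<^sup>2 + 2 * (norm (u k))\<^sup>2))"
    by (rule sum_mono) (use t in auto)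
  also have "(\<Sum>k<N. ((Q k *v ayb k) \<bullet> ayb k + 2 * ((S k *v ayb k) \<bullet> 0) + (R k *v 0) \<bullet> 0 + 2 * (eta k \<bullet> ayb k) + 2 * (rho k \<bullet> 0))
        + ((Q k *v byb k) \<bullet> byb k + 2 * ((S k *v byb k) \<bullet> u k) + (R k *v u k) \<bullet> u k + 2 * (0 \<bullet> byb k) + 2 * (0 \<bullet> u k))
        - K\<^sup>2 / e * (2 * (norm (ayb k))\<^sup>2 + (norm (eta k))\<^sup>2 + (norm (rho k))\<^sup>2)
        - e * (2 * (norm (byb k))\<^sup>2 + 2 * (norm (u k))\<^sup>2))
     = (\<Sum>k<N. (Q k *v ayb k) \<bullet> ayb k + 2 * ((S k *v ayb k) \<bullet> 0) + (R k *v 0) \<bullet> 0 + 2 * (eta k \<bullet> ayb k) + 2 * (rho k \<bullet> 0))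
       + (\<Sum>k<N. (Q k *v byb k) \<bullet> byb k + 2 * ((S k *v byb k) \<bullet> u k) + (R k *v u k) \<bullet> u k + 2 * (0 \<bullet> byb k) + 2 * (0 \<bullet> u k))
       - K\<^sup>2 / e * (\<Sum>k<N. 2 * (norm (ayb k))\<^sup>2 + (norm (eta k))\<^sup>2 + (norm (rho k))\<^sup>2)
       - e * (\<Sum>k<N. 2 * (norm (byb k))\<^sup>2 + 2 * (norm (u k))\<^sup>2)"
    by (rule sum_lin4)
  finally show ?thesis unfolding Phi_def using g by (simp add: algebra_simps)
qed



(* part 7 *)

lemma Phi_cong:
  assumes "y0 = y0'" "\<And>k. k < N \<Longrightarrow> yb k = yb' k" "\<And>k. k < N \<Longrightarrow> u k = u' k"
    "\<And>k. k < N \<Longrightarrow> eta k = eta' k" "\<And>k. k < N \<Longrightarrow> rho k = rho' k"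
  shows "Phi G0 Q S R N y0 yb u eta rho = Phi G0 Q S R N y0' yb' u' eta' rho'"
  unfolding Phi_def using assms by (intro arg_cong2[where f="(+)"] sum.cong) auto

context lqs
begin

interpretation p: prob_space M by (rule ps)

lemma cost_eq:
  "cost M w N A B C q G0 Q S R \<eta> \<rho> \<xi> u = 1/2 * (\<integral>x. Phi G0 Q S R N (Y q \<xi> u N x)
     (\<lambda>k. vcexp M (Fm M w k) (Y q \<xi> u (N - Suc k)) x) (\<lambda>k. u k x) (\<lambda>k. \<eta> k x) (\<lambda>k. \<rho> k x) \<partial>M)"
  unfolding cost_def state_def Phi_def Let_def by simp

lemma zb_L2:
  assumes "L2v M \<xi>" "\<forall>k<N. L2v M (q k)" "\<forall>k<N. L2v M (u k)" "k < N"
  shows "L2v M (vcexp M (Fm M w k) (Y q \<xi> u (N - Suc k)))"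
    "(\<integral>x. (norm (vcexp M (Fm M w k) (Y q \<xi> u (N - Suc k)) x))\<^sup>2 \<partial>M) \<le> (\<integral>x. (norm (Y q \<xi> u (N - Suc k) x))\<^sup>2 \<partial>M)"
proof -
  interpret s: sigma_finite_subalgebra M "Fm M w k" by (rule Fm_sfs) (use assms in simp)
  have "L2v M (Y q \<xi> u (N - Suc k))" by (rule Y_L2) (use assms in auto)
  then show "L2v M (vcexp M (Fm M w k) (Y q \<xi> u (N - Suc k)))"
    "(\<integral>x. (norm (vcexp M (Fm M w k) (Y q \<xi> u (N - Suc k)) x))\<^sup>2 \<partial>M) \<le> (\<integral>x. (norm (Y q \<xi> u (N - Suc k) x))\<^sup>2 \<partial>M)"
    by (rule s.vcexp_L2[OF ps])+
qed

lemma zb_lin: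
  assumes d1: "L2v M \<xi>1" "\<forall>k<N. L2v M (q1 k)" "\<forall>k<N. L2v M (u1 k)"
    and d2: "L2v M \<xi>2" "\<forall>k<N. L2v M (q2 k)" "\<forall>k<N. L2v M (u2 k)"
    and e: "\<xi> = (\<lambda>x. \<alpha> *\<^sub>R \<xi>1 x + \<beta> *\<^sub>R \<xi>2 x)"
      "\<forall>k<N. q k = (\<lambda>x. \<alpha> *\<^sub>R q1 k x + \<beta> *\<^sub>R q2 k x)"
      "\<forall>k<N. u k = (\<lambda>x. \<alpha> *\<^sub>R u1 k x + \<beta> *\<^sub>R u2 k x)"
  shows "AE x in M. Y q \<xi> u N x = \<alpha> *\<^sub>R Y q1 \<xi>1 u1 N x + \<beta> *\<^sub>R Y q2 \<xi>2 u2 N x \<and>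
    (\<forall>k\<in>{..<N}. vcexp M (Fm M w k) (Y q \<xi> u (N - Suc k)) x
       = \<alpha> *\<^sub>R vcexp M (Fm M w k) (Y q1 \<xi>1 u1 (N - Suc k)) x + \<beta> *\<^sub>R vcexp M (Fm M w k) (Y q2 \<xi>2 u2 (N - Suc k)) x)"
proof (rule AE_conjI)
  show "AE x in M. Y q \<xi> u N x = \<alpha> *\<^sub>R Y q1 \<xi>1 u1 N x + \<beta> *\<^sub>R Y q2 \<xi>2 u2 N x"
    by (rule Y_lin[OF d1 d2 e]) simp
  show "AE x in M. \<forall>k\<in>{..<N}. vcexp M (Fm M w k) (Y q \<xi> u (N - Suc k)) x
       = \<alpha> *\<^sub>R vcexp M (Fm M w k) (Y q1 \<xi>1 u1 (N - Suc k)) x + \<beta> *\<^sub>R vcexp M (Fm M w k) (Y q2 \<xi>2 u2 (N - Suc k)) x"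
  proof (rule AE_finite_allI, simp)
    fix k assume "k \<in> {..<N}"
    then have k: "k < N" by simp
    interpret s: sigma_finite_subalgebra M "Fm M w k" by (rule Fm_sfs) (use k in simp)
    have d: "L2v M \<xi>" "\<forall>k<N. L2v M (q k)" "\<forall>k<N. L2v M (u k)"
      using e d1 d2 by (auto intro: L2v_comb)
    define Z where "Z = Y q \<xi> u (N - Suc k)"
    define Z1 where "Z1 = Y q1 \<xi>1 u1 (N - Suc k)"
    define Z2 where "Z2 = Y q2 \<xi>2 u2 (N - Suc k)"
    have L1: "L2v M Z" unfolding Z_def by (rule Y_L2[OF d]) simp
    have L2: "L2v M Z1" unfolding Z1_def by (rule Y_L2[OF d1]) simp
    have L3: "L2v M Z2" unfolding Z2_def by (rule Y_L2[OF d2]) simp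
    note L = L1 L2 L3
    have [measurable]: "Z \<in> borel_measurable M" "Z1 \<in> borel_measurable M" "Z2 \<in> borel_measurable M"
      using L unfolding L2v_def by auto
    have IH: "AE x in M. Z x = \<alpha> *\<^sub>R Z1 x + \<beta> *\<^sub>R Z2 x"
      unfolding Z_def Z1_def Z2_def by (rule Y_lin[OF d1 d2 e]) simp
    have h1: "AE x in M. vcexp M (Fm M w k) Z x = vcexp M (Fm M w k) (\<lambda>z. \<alpha> *\<^sub>R Z1 z + \<beta> *\<^sub>R Z2 z) x"
      by (rule s.vcexp_cong[OF IH]) auto
    have h2: "AE x in M. vcexp M (Fm M w k) (\<lambda>z. \<alpha> *\<^sub>R Z1 z + \<beta> *\<^sub>R Z2 z) x
        = \<alpha> *\<^sub>R vcexp M (Fm M w k) Z1 x + \<beta> *\<^sub>R vcexp M (Fm M w k) Z2 x"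
      by (rule s.vcexp_lin) (use L in \<open>auto intro: p.L2v_integrable L2v_nth\<close>)
    from h1 h2 show "AE x in M. vcexp M (Fm M w k) (Y q \<xi> u (N - Suc k)) x
       = \<alpha> *\<^sub>R vcexp M (Fm M w k) (Y q1 \<xi>1 u1 (N - Suc k)) x + \<beta> *\<^sub>R vcexp M (Fm M w k) (Y q2 \<xi>2 u2 (N - Suc k)) x"
      unfolding Z_def Z1_def Z2_def by eventually_elim simp
  qed
qed

lemma Phi_integrable:
  assumes "L2v M \<xi>" "\<forall>k<N. L2v M (q k)" "\<forall>k<N. L2v M (u k)"
    "\<forall>k<N. L2v M (eta k)" "\<forall>k<N. L2v M (rho k)"
  shows "integrable M (\<lambda>x. Phi G0 Q S R N (Y q \<xi> u N x)
     (\<lambda>k. vcexp M (Fm M w k) (Y q \<xi> u (N - Suc k)) x) (\<lambda>k. u k x) (\<lambda>k. eta k x) (\<lambda>k. rho k x))"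
proof -
  have y0: "L2v M (Y q \<xi> u N)" by (rule Y_L2) (use assms in auto)
  have zb: "L2v M (vcexp M (Fm M w k) (Y q \<xi> u (N - Suc k)))" if "k < N" for k
    by (rule zb_L2(1)) (use assms that in auto)
  show ?thesis unfolding Phi_def
    by (intro Bochner_Integration.integrable_add Bochner_Integration.integrable_sum integrable_mult_right
        L2v_inner L2v_mat y0 zb) (use assms in auto)
qed

lemma Isq_eq:
  assumes "\<forall>k<N. L2v M (u k)"
  shows "Isq u = (\<Sum>k<N. \<integral>x. (norm (u k x))\<^sup>2 \<partial>M)"
  unfolding Isq_def
  by (rule Bochner_Integration.integral_sum) (use assms in \<open>auto simp: L2v_def\<close>)

end


(* part 8 *)

context lqs
begin

interpretation p: prob_space M by (rule ps)

lemma L2F_L2v: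
  assumes "h \<in> L2F M w N" "k < N"
  shows "L2v M (h k)"
proof -
  have hk: "h k \<in> borel_measurable (Fm M w k)" using assms unfolding L2F_def by simp
  have kN: "k \<le> N" using assms by simp
  have "h k \<in> borel_measurable M" by (rule measurable_from_subalg[OF Fm_sub[OF kN] hk])
  then show ?thesis using assms unfolding L2F_def L2v_def by simp
qed

lemma L2F_comb:
  assumes "u \<in> L2F M w N" "v \<in> L2F M w N"
  shows "(\<lambda>k x. a *\<^sub>R u k x + b *\<^sub>R v k x) \<in> L2F M w N"
  unfolding L2F_def
proof (intro CollectI allI impI conjI)
  fix k assume k: "k < N"
  have [measurable]: "u k \<in> borel_measurable (Fm M w k)" "v k \<in> borel_measurable (Fm M w k)"
    using assms k unfolding L2F_def by auto
  show "(\<lambda>x. a *\<^sub>R u k x + b *\<^sub>R v k x) \<in> borel_measurable (Fm M w k)" by measurable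
  show "integrable M (\<lambda>x. (norm (a *\<^sub>R u k x + b *\<^sub>R v k x))\<^sup>2)"
    using L2v_comb[OF L2F_L2v[OF assms(1) k] L2F_L2v[OF assms(2) k], of a b] unfolding L2v_def by simp
qed

lemma Isq_nonneg: "0 \<le> Isq u"
  unfolding Isq_def by (rule integral_nonneg_AE) (auto intro!: sum_nonneg)

end



(* part 9 *)

context lqs
begin

interpretation p: prob_space M by (rule ps)

lemma conv_self: "t *\<^sub>R a + (1 - t) *\<^sub>R a = (a::'b::real_vector)"
  by (simp add: scaleR_left_distrib[symmetric])

lemma strict_conv:
  fixes q \<eta> :: "nat \<Rightarrow> 'a \<Rightarrow> real^'n" and \<rho> :: "nat \<Rightarrow> 'a \<Rightarrow> real^'m"
  assumes xiL: "L2v M \<xi>" and qL: "\<forall>k<N. L2v M (q k)"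
    and etaL: "\<forall>k<N. L2v M (\<eta> k)" and rhoL: "\<forall>k<N. L2v M (\<rho> k)"
    and hyp: "\<forall>u \<in> L2F M w N. cost M w N A B C (\<lambda>_ _. 0) G0 Q S R (\<lambda>_ _. 0) (\<lambda>_ _. 0) (\<lambda>_. 0) u \<ge> r * Isq u"
    and r: "r > 0"
    and u: "u \<in> L2F M w N" and v: "v \<in> L2F M w N"
    and H: "Unorm M N (\<lambda>k x. u k x - v k x) > 0" and t: "0 < t" "t < 1"
  shows "cost M w N A B C q G0 Q S R \<eta> \<rho> \<xi> (\<lambda>k x. t *\<^sub>R u k x + (1 - t) *\<^sub>R v k x)
              < t * cost M w N A B C q G0 Q S R \<eta> \<rho> \<xi> u
                + (1 - t) * cost M w N A B C q G0 Q S R \<eta> \<rho> \<xi> v"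
proof -
  define wt where "wt = (\<lambda>k x. t *\<^sub>R u k x + (1 - t) *\<^sub>R v k x)"
  define dd where "dd = (\<lambda>k x. u k x - v k x)"
  have wtF: "wt \<in> L2F M w N" unfolding wt_def by (rule L2F_comb[OF u v])
  have ddF: "dd \<in> L2F M w N"
  proof -
    have eq: "dd = (\<lambda>k x. 1 *\<^sub>R u k x + (-1) *\<^sub>R v k x)" unfolding dd_def by simp
    show ?thesis unfolding eq by (rule L2F_comb[OF u v])
  qed
  have uL: "\<forall>k<N. L2v M (u k)" using L2F_L2v[OF u] by auto
  have vL: "\<forall>k<N. L2v M (v k)" using L2F_L2v[OF v] by auto
  have wtL: "\<forall>k<N. L2v M (wt k)" using L2F_L2v[OF wtF] by auto
  have ddL: "\<forall>k<N. L2v M (dd k)" using L2F_L2v[OF ddF] by auto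
  have zL: "\<forall>k<N. L2v M ((\<lambda>_ _. 0 :: real^'n) k)" by (simp add: L2v_zero)
  have zL': "\<forall>k<N. L2v M ((\<lambda>_ _. 0 :: real^'m) k)" by (simp add: L2v_zero)
  have z0: "L2v M (\<lambda>_. 0 :: real^'n)" by (rule L2v_zero)
  define Pw where "Pw = (\<lambda>x. Phi G0 Q S R N (Y q \<xi> wt N x)
     (\<lambda>k. vcexp M (Fm M w k) (Y q \<xi> wt (N - Suc k)) x) (\<lambda>k. wt k x) (\<lambda>k. \<eta> k x) (\<lambda>k. \<rho> k x))"
  define Pu where "Pu = (\<lambda>x. Phi G0 Q S R N (Y q \<xi> u N x)
     (\<lambda>k. vcexp M (Fm M w k) (Y q \<xi> u (N - Suc k)) x) (\<lambda>k. u k x) (\<lambda>k. \<eta> k x) (\<lambda>k. \<rho> k x))"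
  define Pv where "Pv = (\<lambda>x. Phi G0 Q S R N (Y q \<xi> v N x)
     (\<lambda>k. vcexp M (Fm M w k) (Y q \<xi> v (N - Suc k)) x) (\<lambda>k. v k x) (\<lambda>k. \<eta> k x) (\<lambda>k. \<rho> k x))"
  define Pd where "Pd = (\<lambda>x. Phi G0 Q S R N (Y (\<lambda>_ _. 0) (\<lambda>_. 0) dd N x)
     (\<lambda>k. vcexp M (Fm M w k) (Y (\<lambda>_ _. 0) (\<lambda>_. 0) dd (N - Suc k)) x) (\<lambda>k. dd k x) (\<lambda>k. 0) (\<lambda>k. 0))"
  have cw: "cost M w N A B C q G0 Q S R \<eta> \<rho> \<xi> wt = 1/2 * integral\<^sup>L M Pw" unfolding Pw_def by (rule cost_eq)
  have cu: "cost M w N A B C q G0 Q S R \<eta> \<rho> \<xi> u = 1/2 * integral\<^sup>L M Pu" unfolding Pu_def by (rule cost_eq)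
  have cv: "cost M w N A B C q G0 Q S R \<eta> \<rho> \<xi> v = 1/2 * integral\<^sup>L M Pv" unfolding Pv_def by (rule cost_eq)
  have cd: "cost M w N A B C (\<lambda>_ _. 0) G0 Q S R (\<lambda>_ _. 0) (\<lambda>_ _. 0) (\<lambda>_. 0) dd = 1/2 * integral\<^sup>L M Pd"
    unfolding Pd_def by (rule cost_eq)
  have iu: "integrable M Pu" unfolding Pu_def by (rule Phi_integrable[OF xiL qL uL etaL rhoL])
  have iv: "integrable M Pv" unfolding Pv_def by (rule Phi_integrable[OF xiL qL vL etaL rhoL])
  have id: "integrable M Pd" unfolding Pd_def
    using Phi_integrable[OF z0 zL ddL zL zL', of G0 Q S R] by simp
  have lw: "AE x in M. Y q \<xi> wt N x = t *\<^sub>R Y q \<xi> u N x + (1 - t) *\<^sub>R Y q \<xi> v N x \<and>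
    (\<forall>k\<in>{..<N}. vcexp M (Fm M w k) (Y q \<xi> wt (N - Suc k)) x
       = t *\<^sub>R vcexp M (Fm M w k) (Y q \<xi> u (N - Suc k)) x + (1 - t) *\<^sub>R vcexp M (Fm M w k) (Y q \<xi> v (N - Suc k)) x)"
    by (rule zb_lin[OF xiL qL uL xiL qL vL]) (simp_all add: wt_def conv_self)
  have ld: "AE x in M. Y (\<lambda>_ _. 0) (\<lambda>_. 0) dd N x = 1 *\<^sub>R Y q \<xi> u N x + (-1) *\<^sub>R Y q \<xi> v N x \<and>
    (\<forall>k\<in>{..<N}. vcexp M (Fm M w k) (Y (\<lambda>_ _. 0) (\<lambda>_. 0) dd (N - Suc k)) x
       = 1 *\<^sub>R vcexp M (Fm M w k) (Y q \<xi> u (N - Suc k)) x + (-1) *\<^sub>R vcexp M (Fm M w k) (Y q \<xi> v (N - Suc k)) x)"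
    by (rule zb_lin[OF xiL qL uL xiL qL vL]) (simp_all add: dd_def)
  have ts: "t + (1 - t) = 1" by simp
  have ae: "AE x in M. Pw x = t * Pu x + (1 - t) * Pv x - t * (1 - t) * Pd x"
    using lw ld
  proof eventually_elim
    case (elim x)
    have "Pw x = Phi G0 Q S R N (t *\<^sub>R Y q \<xi> u N x + (1 - t) *\<^sub>R Y q \<xi> v N x)
        (\<lambda>k. t *\<^sub>R vcexp M (Fm M w k) (Y q \<xi> u (N - Suc k)) x + (1 - t) *\<^sub>R vcexp M (Fm M w k) (Y q \<xi> v (N - Suc k)) x)
        (\<lambda>k. t *\<^sub>R u k x + (1 - t) *\<^sub>R v k x) (\<lambda>k. \<eta> k x) (\<lambda>k. \<rho> k x)"
      unfolding Pw_def by (rule Phi_cong) (use elim in \<open>auto simp: wt_def\<close>)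
    also have "\<dots> = t * Pu x + (1 - t) * Pv x - t * (1 - t) * Phi G0 Q S R N (Y q \<xi> u N x - Y q \<xi> v N x)
        (\<lambda>k. vcexp M (Fm M w k) (Y q \<xi> u (N - Suc k)) x - vcexp M (Fm M w k) (Y q \<xi> v (N - Suc k)) x)
        (\<lambda>k. u k x - v k x) (\<lambda>k. 0) (\<lambda>k. 0)"
      unfolding Pu_def Pv_def by (rule Phi_conv[OF ts])
    also have "Phi G0 Q S R N (Y q \<xi> u N x - Y q \<xi> v N x)
        (\<lambda>k. vcexp M (Fm M w k) (Y q \<xi> u (N - Suc k)) x - vcexp M (Fm M w k) (Y q \<xi> v (N - Suc k)) x)
        (\<lambda>k. u k x - v k x) (\<lambda>k. 0) (\<lambda>k. 0) = Pd x"
      unfolding Pd_def by (rule Phi_cong) (use elim in \<open>auto simp: dd_def\<close>)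
    finally show ?case .
  qed
  have "integral\<^sup>L M Pw = integral\<^sup>L M (\<lambda>x. t * Pu x + (1 - t) * Pv x - t * (1 - t) * Pd x)"
  proof (rule integral_cong_AE)
    have "integrable M Pw" unfolding Pw_def by (rule Phi_integrable[OF xiL qL wtL etaL rhoL])
    then show "Pw \<in> borel_measurable M" by (rule borel_measurable_integrable)
    have "integrable M (\<lambda>x. t * Pu x + (1 - t) * Pv x - t * (1 - t) * Pd x)"
      by (intro Bochner_Integration.integrable_diff Bochner_Integration.integrable_add integrable_mult_right iu iv id)
    then show "(\<lambda>x. t * Pu x + (1 - t) * Pv x - t * (1 - t) * Pd x) \<in> borel_measurable M"
      by (rule borel_measurable_integrable)
    show "AE x in M. Pw x = t * Pu x + (1 - t) * Pv x - t * (1 - t) * Pd x" by (rule ae)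
  qed
  also have "\<dots> = t * integral\<^sup>L M Pu + (1 - t) * integral\<^sup>L M Pv - t * (1 - t) * integral\<^sup>L M Pd"
    using iu iv id by simp
  finally have eqI: "integral\<^sup>L M Pw = t * integral\<^sup>L M Pu + (1 - t) * integral\<^sup>L M Pv - t * (1 - t) * integral\<^sup>L M Pd" .
  have "Isq dd > 0"
  proof -
    have "Unorm M N dd = sqrt (Isq dd)" unfolding Unorm_def Isq_def by simp
    then show ?thesis using H unfolding dd_def by simp
  qed
  then have rI: "r * Isq dd > 0" by (rule mult_pos_pos[OF r])
  have h: "r * Isq dd \<le> cost M w N A B C (\<lambda>_ _. 0) G0 Q S R (\<lambda>_ _. 0) (\<lambda>_ _. 0) (\<lambda>_. 0) dd"
    using hyp ddF by blast
  have "integral\<^sup>L M Pd > 0" using rI h unfolding cd by linarith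
  moreover have "t * (1 - t) > 0" using t by simp
  ultimately have "t * (1 - t) * integral\<^sup>L M Pd > 0" by simp
  then show ?thesis unfolding wt_def[symmetric] cw cu cv using eqI by simp
qed

end


(* part 10 *)

lemma onorm_mat_nonneg: "0 \<le> onorm ((*v) (X :: real^'p^'q))"
  by (rule onorm_pos_le) simp

lemma mat_bound_le:
  fixes X :: "real^'p^'q"
  assumes "onorm ((*v) X) \<le> K"
  shows "norm (X *v x) \<le> K * norm x"
proof -
  have "norm (X *v x) \<le> onorm ((*v) X) * norm x" by (rule onorm) simp
  also have "\<dots> \<le> K * norm x" using assms by (rule mult_right_mono) simp
  finally show ?thesis .
qed

context lqs
begin

interpretation p: prob_space M by (rule ps)

lemma coercive:
  fixes q \<eta> :: "nat \<Rightarrow> 'a \<Rightarrow> real^'n" and \<rho> :: "nat \<Rightarrow> 'a \<Rightarrow> real^'m"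
  assumes xiL: "L2v M \<xi>" and qL: "\<forall>k<N. L2v M (q k)"
    and etaL: "\<forall>k<N. L2v M (\<eta> k)" and rhoL: "\<forall>k<N. L2v M (\<rho> k)"
    and hyp: "\<forall>u \<in> L2F M w N. cost M w N A B C (\<lambda>_ _. 0) G0 Q S R (\<lambda>_ _. 0) (\<lambda>_ _. 0) (\<lambda>_. 0) u \<ge> r * Isq u"
    and r: "r > 0"
  shows "\<forall>c::real. \<exists>K::real. \<forall>u \<in> L2F M w N.
            Unorm M N u > K \<longrightarrow> cost M w N A B C q G0 Q S R \<eta> \<rho> \<xi> u > c"
proof -
  have zL: "\<forall>k<N. L2v M ((\<lambda>_ _. 0 :: real^'n) k)" by (simp add: L2v_zero)
  have zL': "\<forall>k<N. L2v M ((\<lambda>_ _. 0 :: real^'m) k)" by (simp add: L2v_zero)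
  have z0: "L2v M (\<lambda>_. 0 :: real^'n)" by (rule L2v_zero)
  define KK where "KK = 1 + onorm ((*v) G0) + (\<Sum>k<N. onorm ((*v) (Q k)) + onorm ((*v) (S k)))"
  have sn: "0 \<le> (\<Sum>k<N. onorm ((*v) (Q k)) + onorm ((*v) (S k)))"
    by (intro sum_nonneg add_nonneg_nonneg onorm_mat_nonneg)
  have KK1: "1 \<le> KK" unfolding KK_def using sn onorm_mat_nonneg[of G0] by linarith
  have KG: "\<And>x. norm (G0 *v x) \<le> KK * norm x"
    by (rule mat_bound_le) (use sn in \<open>simp add: KK_def\<close>)
  have le_sum: "onorm ((*v) (Q k)) + onorm ((*v) (S k)) \<le> (\<Sum>k<N. onorm ((*v) (Q k)) + onorm ((*v) (S k)))"
    if "k < N" for k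
    by (rule member_le_sum[where f="\<lambda>k. onorm ((*v) (Q k)) + onorm ((*v) (S k))"])
       (use that in \<open>auto intro!: add_nonneg_nonneg onorm_mat_nonneg\<close>)
  have KQ: "\<And>k x. k < N \<Longrightarrow> norm (Q k *v x) \<le> KK * norm x"
  proof -
    fix k x assume k: "k < N"
    show "norm (Q k *v x) \<le> KK * norm x"
      by (rule mat_bound_le) (use le_sum[OF k] onorm_mat_nonneg[of "S k"] onorm_mat_nonneg[of G0] in \<open>simp add: KK_def\<close>)
  qed
  have KS: "\<And>k x. k < N \<Longrightarrow> norm (S k *v x) \<le> KK * norm x"
  proof -
    fix k x assume k: "k < N"
    show "norm (S k *v x) \<le> KK * norm x"
      by (rule mat_bound_le) (use le_sum[OF k] onorm_mat_nonneg[of "Q k"] onorm_mat_nonneg[of G0] in \<open>simp add: KK_def\<close>)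
  qed
  have "\<forall>j\<in>{..N}. \<exists>D. D \<ge> 0 \<and> (\<forall>u. (\<forall>k<N. L2v M (u k)) \<longrightarrow>
     (\<integral>x. (norm (Y (\<lambda>_ _. 0) (\<lambda>_. 0) u j x))\<^sup>2 \<partial>M) \<le> D * Isq u)"
    using Y_bound by auto
  from bchoice[OF this] obtain Df where Df: "\<forall>j\<in>{..N}. Df j \<ge> 0 \<and> (\<forall>u. (\<forall>k<N. L2v M (u k)) \<longrightarrow>
     (\<integral>x. (norm (Y (\<lambda>_ _. 0) (\<lambda>_. 0) u j x))\<^sup>2 \<partial>M) \<le> Df j * Isq u)" by blast
  define Dt where "Dt = (\<Sum>j\<le>N. Df j)"
  have Dt0: "Dt \<ge> 0" unfolding Dt_def using Df by (auto intro!: sum_nonneg)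
  have Dtb: "(\<integral>x. (norm (Y (\<lambda>_ _. 0) (\<lambda>_. 0) u j x))\<^sup>2 \<partial>M) \<le> Dt * Isq u"
    if "\<forall>k<N. L2v M (u k)" "j \<le> N" for u :: "nat \<Rightarrow> 'a \<Rightarrow> real^'m" and j
  proof -
    have "Df j \<le> Dt" unfolding Dt_def by (rule member_le_sum) (use Df that in auto)
    then have "Df j * Isq u \<le> Dt * Isq u" by (rule mult_right_mono[OF _ Isq_nonneg])
    moreover have "(\<integral>x. (norm (Y (\<lambda>_ _. 0) (\<lambda>_. 0) u j x))\<^sup>2 \<partial>M) \<le> Df j * Isq u"
      using Df that by auto
    ultimately show ?thesis by linarith
  qed
  define Cq where "Cq = Dt + 2 * real N * Dt + 2"
  have "0 \<le> 2 * real N * Dt" using Dt0 by simp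
  then have Cq: "Cq > 0" unfolding Cq_def using Dt0 by linarith
  define e where "e = r / Cq"
  have e: "e > 0" unfolding e_def using r Cq by simp
  have eCq: "e * Cq = r" unfolding e_def using Cq by simp
  define ya where "ya = Y q \<xi> (\<lambda>_ _. 0)"
  define za where "za = (\<lambda>k. vcexp M (Fm M w k) (ya (N - Suc k)))"
  define Phia where "Phia = (\<lambda>x. Phi G0 Q S R N (ya N x) (\<lambda>k. za k x) (\<lambda>k. 0) (\<lambda>k. \<eta> k x) (\<lambda>k. \<rho> k x))"
  define Pa where "Pa = (\<lambda>x. (norm (ya N x))\<^sup>2 + (\<Sum>k<N. 2 * (norm (za k x))\<^sup>2 + (norm (\<eta> k x))\<^sup>2 + (norm (\<rho> k x))\<^sup>2))"
  have iPhia: "integrable M Phia"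
    unfolding Phia_def ya_def za_def using Phi_integrable[OF xiL qL zL' etaL rhoL, of G0 Q S R] by simp
  have yaL: "L2v M (ya N)" unfolding ya_def by (rule Y_L2[OF xiL qL zL']) simp
  have zaL: "L2v M (za k)" if "k < N" for k
    unfolding za_def ya_def by (rule zb_L2(1)[OF xiL qL zL' that])
  have iPa: "integrable M Pa" unfolding Pa_def
    by (intro Bochner_Integration.integrable_add Bochner_Integration.integrable_sum integrable_mult_right)
       (use yaL zaL etaL rhoL in \<open>auto simp: L2v_def\<close>)
  define T where "T = KK\<^sup>2 / e * integral\<^sup>L M Pa"
  define ca where "ca = 1/2 * integral\<^sup>L M Phia - T / 2"
  show ?thesis
  proof (intro allI)
    fix c :: real
    define m where "m = max 0 (2 * (c - ca) / r)"
    show "\<exists>K. \<forall>u\<in>L2F M w N. K < Unorm M N u \<longrightarrow> c < cost M w N A B C q G0 Q S R \<eta> \<rho> \<xi> u"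
    proof (intro exI[of _ "sqrt m"] ballI impI)
      fix u :: "nat \<Rightarrow> 'a \<Rightarrow> real^'m" assume u: "u \<in> L2F M w N" and uK: "sqrt m < Unorm M N u"
      have uL: "\<forall>k<N. L2v M (u k)" using L2F_L2v[OF u] by auto
      have Im: "Isq u > m"
      proof -
        have "Unorm M N u = sqrt (Isq u)" unfolding Unorm_def Isq_def by simp
        then show ?thesis using uK by simp
      qed
      define yb where "yb = Y (\<lambda>_ _. 0) (\<lambda>_. 0) u"
      define zb where "zb = (\<lambda>k. vcexp M (Fm M w k) (yb (N - Suc k)))"
      define Phib where "Phib = (\<lambda>x. Phi G0 Q S R N (yb N x) (\<lambda>k. zb k x) (\<lambda>k. u k x) (\<lambda>k. 0) (\<lambda>k. 0))"
      define Phiu where "Phiu = (\<lambda>x. Phi G0 Q S R N (Y q \<xi> u N x)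
         (\<lambda>k. vcexp M (Fm M w k) (Y q \<xi> u (N - Suc k)) x) (\<lambda>k. u k x) (\<lambda>k. \<eta> k x) (\<lambda>k. \<rho> k x))"
      define Qb where "Qb = (\<lambda>x. (norm (yb N x))\<^sup>2 + (\<Sum>k<N. 2 * (norm (zb k x))\<^sup>2 + 2 * (norm (u k x))\<^sup>2))"
      have cu: "cost M w N A B C q G0 Q S R \<eta> \<rho> \<xi> u = 1/2 * integral\<^sup>L M Phiu"
        unfolding Phiu_def by (rule cost_eq)
      have cb: "cost M w N A B C (\<lambda>_ _. 0) G0 Q S R (\<lambda>_ _. 0) (\<lambda>_ _. 0) (\<lambda>_. 0) u = 1/2 * integral\<^sup>L M Phib"
        unfolding Phib_def yb_def zb_def by (rule cost_eq)
      have hb: "1/2 * integral\<^sup>L M Phib \<ge> r * Isq u" using hyp u cb by auto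
      have iPhiu: "integrable M Phiu" unfolding Phiu_def by (rule Phi_integrable[OF xiL qL uL etaL rhoL])
      have iPhib: "integrable M Phib"
        unfolding Phib_def yb_def zb_def using Phi_integrable[OF z0 zL uL zL zL', of G0 Q S R] by simp
      have ybL: "L2v M (yb N)" unfolding yb_def by (rule Y_L2[OF z0 zL uL]) simp
      have zbL: "L2v M (zb k)" if "k < N" for k
        unfolding zb_def yb_def by (rule zb_L2(1)[OF z0 zL uL that])
      have zbB: "(\<integral>x. (norm (zb k x))\<^sup>2 \<partial>M) \<le> Dt * Isq u" if "k < N" for k
      proof -
        have "(\<integral>x. (norm (zb k x))\<^sup>2 \<partial>M) \<le> (\<integral>x. (norm (yb (N - Suc k) x))\<^sup>2 \<partial>M)"
          unfolding zb_def yb_def by (rule zb_L2(2)[OF z0 zL uL that])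
        also have "\<dots> \<le> Dt * Isq u" unfolding yb_def by (rule Dtb[OF uL]) simp
        finally show ?thesis .
      qed
      have ybB: "(\<integral>x. (norm (yb N x))\<^sup>2 \<partial>M) \<le> Dt * Isq u" unfolding yb_def by (rule Dtb[OF uL]) simp
      have i1: "integrable M (\<lambda>x. (norm (yb N x))\<^sup>2)" using ybL unfolding L2v_def by simp
      have i2: "integrable M (\<lambda>x. 2 * (norm (zb k x))\<^sup>2 + 2 * (norm (u k x))\<^sup>2)" if "k < N" for k
        using zbL[OF that] uL that unfolding L2v_def by simp
      have i2': "integrable M (\<lambda>x. \<Sum>k<N. 2 * (norm (zb k x))\<^sup>2 + 2 * (norm (u k x))\<^sup>2)"
        by (rule Bochner_Integration.integrable_sum) (use i2 in simp)
      have iQb: "integrable M Qb" unfolding Qb_def using i1 i2' by simp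
      have "integral\<^sup>L M Qb = (\<integral>x. (norm (yb N x))\<^sup>2 \<partial>M)
          + (\<integral>x. (\<Sum>k<N. 2 * (norm (zb k x))\<^sup>2 + 2 * (norm (u k x))\<^sup>2) \<partial>M)"
        unfolding Qb_def by (rule Bochner_Integration.integral_add[OF i1 i2'])
      also have "(\<integral>x. (\<Sum>k<N. 2 * (norm (zb k x))\<^sup>2 + 2 * (norm (u k x))\<^sup>2) \<partial>M)
          = (\<Sum>k<N. \<integral>x. 2 * (norm (zb k x))\<^sup>2 + 2 * (norm (u k x))\<^sup>2 \<partial>M)"
        by (rule Bochner_Integration.integral_sum) (use i2 in simp)
      also have "\<dots> = (\<Sum>k<N. 2 * (\<integral>x. (norm (zb k x))\<^sup>2 \<partial>M) + 2 * (\<integral>x. (norm (u k x))\<^sup>2 \<partial>M))"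
        by (rule sum.cong[OF refl]) (use zbL uL in \<open>auto simp: L2v_def\<close>)
      also have "\<dots> \<le> (\<Sum>k<N. 2 * (Dt * Isq u) + 2 * (\<integral>x. (norm (u k x))\<^sup>2 \<partial>M))"
        by (rule sum_mono) (use zbB in auto)
      also have "\<dots> = 2 * real N * (Dt * Isq u) + 2 * Isq u"
        by (simp only: sum.distrib sum_distrib_left[symmetric] Isq_eq[OF uL, symmetric]) simp
      finally have QbB: "integral\<^sup>L M Qb \<le> Cq * Isq u"
        using ybB unfolding Cq_def by (simp add: algebra_simps)
      have lin: "AE x in M. Y q \<xi> u N x = 1 *\<^sub>R ya N x + 1 *\<^sub>R yb N x \<and>
        (\<forall>k\<in>{..<N}. vcexp M (Fm M w k) (Y q \<xi> u (N - Suc k)) x = 1 *\<^sub>R za k x + 1 *\<^sub>R zb k x)"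
        unfolding ya_def yb_def za_def zb_def
        by (rule zb_lin[OF xiL qL zL' z0 zL uL]) simp_all
      have ae: "AE x in M. Phia x + Phib x - KK\<^sup>2 / e * Pa x - e * Qb x \<le> Phiu x"
        using lin
      proof eventually_elim
        case (elim x)
        have "Phiu x = Phi G0 Q S R N (ya N x + yb N x) (\<lambda>k. za k x + zb k x) (\<lambda>k. u k x) (\<lambda>k. \<eta> k x) (\<lambda>k. \<rho> k x)"
          unfolding Phiu_def by (rule Phi_cong) (use elim in auto)
        moreover have "Phi G0 Q S R N (ya N x + yb N x) (\<lambda>k. za k x + zb k x) (\<lambda>k. u k x) (\<lambda>k. \<eta> k x) (\<lambda>k. \<rho> k x)
            \<ge> Phia x + Phib x - KK\<^sup>2 / e * Pa x - e * Qb x"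
          unfolding Phia_def Phib_def Pa_def Qb_def by (rule Phi_split[OF e KK1 KG KQ KS])
        ultimately show ?case by simp
      qed
      have "integral\<^sup>L M Phia + integral\<^sup>L M Phib - KK\<^sup>2 / e * integral\<^sup>L M Pa - e * integral\<^sup>L M Qb
          = (\<integral>x. Phia x + Phib x - KK\<^sup>2 / e * Pa x - e * Qb x \<partial>M)"
        using iPhia iPhib iPa iQb by simp
      also have "\<dots> \<le> integral\<^sup>L M Phiu"
        by (rule integral_mono_AE[OF _ iPhiu ae]) (use iPhia iPhib iPa iQb in simp)
      finally have big: "integral\<^sup>L M Phia + integral\<^sup>L M Phib - T - e * integral\<^sup>L M Qb
          \<le> integral\<^sup>L M Phiu" unfolding T_def .
      have eQ: "e * integral\<^sup>L M Qb \<le> r * Isq u"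
        using mult_left_mono[OF QbB, of e] e eCq by (simp add: mult.assoc[symmetric])
      have "cost M w N A B C q G0 Q S R \<eta> \<rho> \<xi> u \<ge> ca + r / 2 * Isq u"
        using big hb eQ unfolding cu ca_def by linarith
      moreover have "r / 2 * Isq u > c - ca"
      proof -
        have "m \<ge> 2 * (c - ca) / r" unfolding m_def by simp
        then have "r / 2 * m \<ge> c - ca" using r by (simp add: field_simps)
        moreover have "r / 2 * Isq u > r / 2 * m" using Im r by simp
        ultimately show ?thesis by linarith
      qed
      ultimately show "c < cost M w N A B C q G0 Q S R \<eta> \<rho> \<xi> u" by linarith
    qed
  qed
qed

end


theorem lemma3p4:
  fixes M :: "'a measure" and w :: "nat \<Rightarrow> 'a \<Rightarrow> real" and N :: nat
    and A C :: "nat \<Rightarrow> real^'n^'n" and B :: "nat \<Rightarrow> real^'m^'n"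
    and q \<eta> :: "nat \<Rightarrow> 'a \<Rightarrow> real^'n" and \<rho> :: "nat \<Rightarrow> 'a \<Rightarrow> real^'m"
    and G0 :: "real^'n^'n" and Q :: "nat \<Rightarrow> real^'n^'n" and R :: "nat \<Rightarrow> real^'m^'m"
    and S :: "nat \<Rightarrow> real^'n^'m" and r :: real and \<xi> :: "'a \<Rightarrow> real^'n"
  assumes "prob_space M" and "complete_measure M" and "N \<ge> 1"
    and "\<forall>k<N. w k \<in> borel_measurable M \<and> integrable M (\<lambda>x. (w k x)\<^sup>2)"
    and "\<forall>k<N. AE x in M. real_cond_exp M (Fm M w k) (w k) x = 0"
    and "\<forall>k<N. AE x in M. real_cond_exp M (Fm M w k) (\<lambda>z. (w k z)\<^sup>2) x = 1"
    and "q \<in> L2F M w N" and "\<eta> \<in> L2F M w N" and "\<rho> \<in> L2F M w N"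
    and "transpose G0 = G0"
    and "\<forall>k<N. transpose (Q k) = Q k \<and> transpose (R k) = R k"
    and "r > 0"
    and "\<forall>u \<in> L2F M w N.
           cost M w N A B C (\<lambda>_ _. 0) G0 Q S R (\<lambda>_ _. 0) (\<lambda>_ _. 0) (\<lambda>_. 0) u
             \<ge> r * integral\<^sup>L M (\<lambda>x. \<Sum>k<N. (norm (u k x))\<^sup>2)"
    and "\<xi> \<in> borel_measurable (Fm M w N)" and "integrable M (\<lambda>x. (norm (\<xi> x))\<^sup>2)"
  shows "(\<forall>u \<in> L2F M w N. \<forall>v \<in> L2F M w N. \<forall>t::real.
            Unorm M N (\<lambda>k x. u k x - v k x) > 0 \<and> 0 < t \<and> t < 1 \<longrightarrow>
              cost M w N A B C q G0 Q S R \<eta> \<rho> \<xi> (\<lambda>k x. t *\<^sub>R u k x + (1 - t) *\<^sub>R v k x)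
              < t * cost M w N A B C q G0 Q S R \<eta> \<rho> \<xi> u
                + (1 - t) * cost M w N A B C q G0 Q S R \<eta> \<rho> \<xi> v)
       \<and> (\<forall>c::real. \<exists>K::real. \<forall>u \<in> L2F M w N.
            Unorm M N u > K \<longrightarrow> cost M w N A B C q G0 Q S R \<eta> \<rho> \<xi> u > c)"
proof -
  interpret lqs M w N A C B
    by (rule lqs.intro[OF assms(1)]) (use assms(4,6) in auto)
  have xim: "\<xi> \<in> borel_measurable M"
    by (rule measurable_from_subalg[OF Fm_sub[of N] assms(14)]) simp
  have xiL: "L2v M \<xi>" unfolding L2v_def using xim assms(15) by simp
  have qL: "\<forall>k<N. L2v M (q k)" using L2F_L2v[OF assms(7)] by auto
  have etaL: "\<forall>k<N. L2v M (\<eta> k)" using L2F_L2v[OF assms(8)] by auto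
  have rhoL: "\<forall>k<N. L2v M (\<rho> k)" using L2F_L2v[OF assms(9)] by auto
  have hyp: "\<forall>u \<in> L2F M w N. cost M w N A B C (\<lambda>_ _. 0) G0 Q S R (\<lambda>_ _. 0) (\<lambda>_ _. 0) (\<lambda>_. 0) u \<ge> r * Isq u"
    using assms(13) unfolding Isq_def .
  show ?thesis
  proof (rule conjI)
    show "\<forall>u \<in> L2F M w N. \<forall>v \<in> L2F M w N. \<forall>t::real.
            Unorm M N (\<lambda>k x. u k x - v k x) > 0 \<and> 0 < t \<and> t < 1 \<longrightarrow>
              cost M w N A B C q G0 Q S R \<eta> \<rho> \<xi> (\<lambda>k x. t *\<^sub>R u k x + (1 - t) *\<^sub>R v k x)
              < t * cost M w N A B C q G0 Q S R \<eta> \<rho> \<xi> u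
                + (1 - t) * cost M w N A B C q G0 Q S R \<eta> \<rho> \<xi> v"
    proof (intro ballI allI impI)
      fix u v :: "nat \<Rightarrow> 'a \<Rightarrow> real^'m" and t :: real
      assume u: "u \<in> L2F M w N" and v: "v \<in> L2F M w N"
        and H: "Unorm M N (\<lambda>k x. u k x - v k x) > 0 \<and> 0 < t \<and> t < 1"
      show "cost M w N A B C q G0 Q S R \<eta> \<rho> \<xi> (\<lambda>k x. t *\<^sub>R u k x + (1 - t) *\<^sub>R v k x)
              < t * cost M w N A B C q G0 Q S R \<eta> \<rho> \<xi> u
                + (1 - t) * cost M w N A B C q G0 Q S R \<eta> \<rho> \<xi> v"
        by (rule strict_conv[OF xiL qL etaL rhoL hyp assms(12) u v]) (use H in auto)
    qed
    show "\<forall>c::real. \<exists>K::real. \<forall>u \<in> L2F M w N.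
            Unorm M N u > K \<longrightarrow> cost M w N A B C q G0 Q S R \<eta> \<rho> \<xi> u > c"
      by (rule coercive[OF xiL qL etaL rhoL hyp assms(12)])
  qed
qed

end
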